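(* Let $2\leq\alpha,\beta\leq\omega$. Then there is a recursive set $\Theta$ of first-order sentences in the signature of posets (one binary relation $\leq$) such that for every countable poset $P$, $P\models\Theta$ if and only if $P$ is $(\alpha,\beta)$-representable.
   Context: The result is asserted to hold in ZF, without any form of the Axiom of Choice. A poset $P$ is $(\alpha,\beta)$-representable if there is a set $X$ and an order embedding $h:P\to\wp(X)$ ($\wp(X)$ ordered by inclusion) such that whenever $S\subseteq P$ with $|S|<\alpha$ and $\bigwedge S$ exists in $P$ then $h(\bigwedge S)=\bigcap h[S]$ (with $\bigcap\emptyset=X$), and whenever $T\subseteq P$ with $|T|<\beta$ and $\bigvee T$ exists in $P$ then $h(\bigvee T)=\bigcup h[T]$. *)

theory Defs
  imports Main "HOL-Library.Nat_Bijection" "HOL-Library.Extended_Nat"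
begin

datatype fm =
    FLe nat nat
  | FEq nat nat
  | FFalse
  | FImp fm fm
  | FAll nat fm

fun freevars :: "fm \<Rightarrow> nat set" where
  "freevars (FLe i j) = {i, j}"
| "freevars (FEq i j) = {i, j}"
| "freevars FFalse = {}"
| "freevars (FImp a b) = freevars a \<union> freevars b"
| "freevars (FAll i a) = freevars a - {i}"

definition sentence :: "fm \<Rightarrow> bool" where
  "sentence \<phi> \<longleftrightarrow> freevars \<phi> = {}"

fun sat :: "'a set \<Rightarrow> ('a \<Rightarrow> 'a \<Rightarrow> bool) \<Rightarrow> (nat \<Rightarrow> 'a) \<Rightarrow> fm \<Rightarrow> bool" where
  "sat A le e (FLe i j) = le (e i) (e j)"
| "sat A le e (FEq i j) = (e i = e j)"
| "sat A le e FFalse = False"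
| "sat A le e (FImp a b) = (sat A le e a \<longrightarrow> sat A le e b)"
| "sat A le e (FAll i a) = (\<forall>x\<in>A. sat A le (e(i := x)) a)"

definition models :: "'a set \<Rightarrow> ('a \<Rightarrow> 'a \<Rightarrow> bool) \<Rightarrow> fm set \<Rightarrow> bool" where
  "models A le \<Theta> \<longleftrightarrow> (\<forall>\<phi>\<in>\<Theta>. \<forall>e. (\<forall>i. e i \<in> A) \<longrightarrow> sat A le e \<phi>)"

fun enc :: "fm \<Rightarrow> nat" where
  "enc (FLe i j) = prod_encode (0, prod_encode (i, j))"
| "enc (FEq i j) = prod_encode (1, prod_encode (i, j))"
| "enc FFalse = prod_encode (2, 0)"
| "enc (FImp a b) = prod_encode (3, prod_encode (enc a, enc b))"
| "enc (FAll i a) = prod_encode (4, prod_encode (i, enc a))"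

inductive recfn :: "nat \<Rightarrow> (nat list \<Rightarrow> nat) \<Rightarrow> bool" where
  rzero: "recfn n (\<lambda>_. 0)"
| rsucc: "recfn 1 (\<lambda>xs. Suc (hd xs))"
| rproj: "i < n \<Longrightarrow> recfn n (\<lambda>xs. xs ! i)"
| rcomp: "\<lbrakk> recfn m f; length gs = m; \<forall>g\<in>set gs. recfn n g \<rbrakk>
          \<Longrightarrow> recfn n (\<lambda>xs. f (map (\<lambda>g. g xs) gs))"
| rprim: "\<lbrakk> recfn n f; recfn (Suc (Suc n)) g \<rbrakk>
          \<Longrightarrow> recfn (Suc n) (\<lambda>xs. rec_nat (f (tl xs)) (\<lambda>k r. g (k # r # tl xs)) (hd xs))"
| rmin: "\<lbrakk> recfn (Suc n) g; \<forall>xs. length xs = n \<longrightarrow> (\<exists>y. g (y # xs) = 0) \<rbrakk>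
          \<Longrightarrow> recfn n (\<lambda>xs. LEAST y. g (y # xs) = 0)"

definition recursive_set :: "nat set \<Rightarrow> bool" where
  "recursive_set S \<longleftrightarrow> (\<exists>f. recfn 1 f \<and> (\<forall>x. x \<in> S \<longleftrightarrow> f [x] = 0))"

definition recursive_fmset :: "fm set \<Rightarrow> bool" where
  "recursive_fmset \<Theta> \<longleftrightarrow> recursive_set (enc ` \<Theta>)"

definition poset_on :: "'a set \<Rightarrow> ('a \<Rightarrow> 'a \<Rightarrow> bool) \<Rightarrow> bool" where
  "poset_on A le \<longleftrightarrow> (\<forall>x\<in>A. le x x) \<and>
     (\<forall>x\<in>A. \<forall>y\<in>A. le x y \<and> le y x \<longrightarrow> x = y) \<and>
     (\<forall>x\<in>A. \<forall>y\<in>A. \<forall>z\<in>A. le x y \<and> le y z \<longrightarrow> le x z)"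

text \<open>|S| < \<kappa> for \<kappa> \<in> {2,3,...} \<union> {\<omega>}, with \<omega> represented by \<infinity>.\<close>
definition card_less :: "'a set \<Rightarrow> enat \<Rightarrow> bool" where
  "card_less S \<kappa> \<longleftrightarrow> finite S \<and> enat (card S) < \<kappa>"

definition is_meet :: "'a set \<Rightarrow> ('a \<Rightarrow> 'a \<Rightarrow> bool) \<Rightarrow> 'a set \<Rightarrow> 'a \<Rightarrow> bool" where
  "is_meet A le S m \<longleftrightarrow> m \<in> A \<and> (\<forall>s\<in>S. le m s) \<and> (\<forall>x\<in>A. (\<forall>s\<in>S. le x s) \<longrightarrow> le x m)"

definition is_join :: "'a set \<Rightarrow> ('a \<Rightarrow> 'a \<Rightarrow> bool) \<Rightarrow> 'a set \<Rightarrow> 'a \<Rightarrow> bool" where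
  "is_join A le S m \<longleftrightarrow> m \<in> A \<and> (\<forall>s\<in>S. le s m) \<and> (\<forall>x\<in>A. (\<forall>s\<in>S. le s x) \<longrightarrow> le m x)"

definition representation :: "enat \<Rightarrow> enat \<Rightarrow> 'a set \<Rightarrow> ('a \<Rightarrow> 'a \<Rightarrow> bool) \<Rightarrow> 'x set \<Rightarrow> ('a \<Rightarrow> 'x set) \<Rightarrow> bool" where
  "representation \<alpha> \<beta> A le X h \<longleftrightarrow>
     (\<forall>p\<in>A. h p \<subseteq> X) \<and>
     (\<forall>p\<in>A. \<forall>q\<in>A. le p q \<longleftrightarrow> h p \<subseteq> h q) \<and>
     (\<forall>S m. S \<subseteq> A \<and> card_less S \<alpha> \<and> is_meet A le S m \<longrightarrow> h m = X \<inter> (\<Inter>s\<in>S. h s)) \<and>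
     (\<forall>T m. T \<subseteq> A \<and> card_less T \<beta> \<and> is_join A le T m \<longrightarrow> h m = (\<Union>t\<in>T. h t))"

text \<open>Points of X may w.l.o.g. be taken to be subsets of the carrier (identify a point with
  the set of poset elements whose image contains it); hence X :: 'a set set.\<close>
definition representable :: "enat \<Rightarrow> enat \<Rightarrow> 'a set \<Rightarrow> ('a \<Rightarrow> 'a \<Rightarrow> bool) \<Rightarrow> bool" where
  "representable \<alpha> \<beta> A le \<longleftrightarrow> (\<exists>(X :: 'a set set) h. representation \<alpha> \<beta> A le X h)"

end

theory Submission
  imports Defs
begin


definition computable :: "nat \<Rightarrow> (nat list \<Rightarrow> nat) \<Rightarrow> bool" where
  "computable n F \<longleftrightarrow> (\<exists>f. recfn n f \<and> (\<forall>xs. length xs = n \<longrightarrow> f xs = F xs))"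

lemma c_cong: "computable n F \<Longrightarrow> (\<And>xs. length xs = n \<Longrightarrow> F xs = G xs) \<Longrightarrow> computable n G"
  unfolding computable_def by metis

lemma c_recfn: "recfn n f \<Longrightarrow> computable n f"
  unfolding computable_def by blast

lemma c_nth: "i < n \<Longrightarrow> computable n (\<lambda>xs. xs ! i)"
  by (rule c_recfn, rule rproj)

lemma c_succ: "computable 1 (\<lambda>xs. Suc (hd xs))"
  by (rule c_recfn, rule rsucc)

lemma c_list:
  assumes "\<forall>G\<in>set Gs. computable n G"
  shows "\<exists>gs. length gs = length Gs \<and> (\<forall>g\<in>set gs. recfn n g) \<and>
     (\<forall>xs. length xs = n \<longrightarrow> map (\<lambda>g. g xs) gs = map (\<lambda>G. G xs) Gs)"
  using assms
proof (induction Gs)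
  case Nil then show ?case by auto
next
  case (Cons G Gs)
  then obtain gs where gs: "length gs = length Gs" "\<forall>g\<in>set gs. recfn n g"
     "\<forall>xs. length xs = n \<longrightarrow> map (\<lambda>g. g xs) gs = map (\<lambda>G. G xs) Gs" by auto
  from Cons.prems obtain g where g: "recfn n g" "\<forall>xs. length xs = n \<longrightarrow> g xs = G xs"
    unfolding computable_def by auto
  show ?case by (rule exI[of _ "g # gs"]) (use gs g in auto)
qed

lemma c_comp:
  assumes "computable m F" "length Gs = m" "\<forall>G\<in>set Gs. computable n G"
  shows "computable n (\<lambda>xs. F (map (\<lambda>G. G xs) Gs))"
proof -
  obtain f where f: "recfn m f" "\<forall>xs. length xs = m \<longrightarrow> f xs = F xs"
    using assms(1) unfolding computable_def by auto
  obtain gs where gs: "length gs = length Gs" "\<forall>g\<in>set gs. recfn n g"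
     "\<forall>xs. length xs = n \<longrightarrow> map (\<lambda>g. g xs) gs = map (\<lambda>G. G xs) Gs"
    using c_list[OF assms(3)] by auto
  have "recfn n (\<lambda>xs. f (map (\<lambda>g. g xs) gs))"
    using f gs assms(2) by (intro rcomp) auto
  moreover have "\<forall>xs. length xs = n \<longrightarrow> f (map (\<lambda>g. g xs) gs) = F (map (\<lambda>G. G xs) Gs)"
    using f gs assms(2) by auto
  ultimately show ?thesis unfolding computable_def by blast
qed

lemma c_prim:
  assumes "computable n B" "computable (Suc (Suc n)) S"
  shows "computable (Suc n) (\<lambda>xs. rec_nat (B (tl xs)) (\<lambda>k r. S (k # r # tl xs)) (hd xs))"
proof -
  obtain f where f: "recfn n f" "\<forall>xs. length xs = n \<longrightarrow> f xs = B xs"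
    using assms(1) unfolding computable_def by auto
  obtain g where g: "recfn (Suc (Suc n)) g" "\<forall>xs. length xs = Suc (Suc n) \<longrightarrow> g xs = S xs"
    using assms(2) unfolding computable_def by auto
  have "recfn (Suc n) (\<lambda>xs. rec_nat (f (tl xs)) (\<lambda>k r. g (k # r # tl xs)) (hd xs))"
    using f g by (intro rprim) auto
  moreover have "\<forall>xs. length xs = Suc n \<longrightarrow> rec_nat (f (tl xs)) (\<lambda>k r. g (k # r # tl xs)) (hd xs)
     = rec_nat (B (tl xs)) (\<lambda>k r. S (k # r # tl xs)) (hd xs)"
    using f g by auto
  ultimately show ?thesis unfolding computable_def by blast
qed

lemma c_const: "computable n (\<lambda>_. k)"
proof (induction k)
  case 0 then show ?case by (rule c_recfn, rule rzero)
next
  case (Suc k)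
  have "computable n (\<lambda>xs. Suc (hd (map (\<lambda>G. G xs) [\<lambda>_. k])))"
    by (rule c_comp[OF c_succ]) (use Suc in auto)
  then show ?case by simp
qed

lemma c_app1: "computable 1 F \<Longrightarrow> computable n g \<Longrightarrow> computable n (\<lambda>xs. F [g xs])"
  using c_comp[of 1 F "[g]" n] by simp
lemma c_app2: "computable 2 F \<Longrightarrow> computable n g \<Longrightarrow> computable n h \<Longrightarrow> computable n (\<lambda>xs. F [g xs, h xs])"
  using c_comp[of 2 F "[g,h]" n] by simp
lemma c_app3: "computable 3 F \<Longrightarrow> computable n g \<Longrightarrow> computable n h \<Longrightarrow> computable n k \<Longrightarrow> computable n (\<lambda>xs. F [g xs, h xs, k xs])"
  using c_comp[of 3 F "[g,h,k]" n] by simp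

lemma c_op1: "computable 1 (\<lambda>xs. f (xs!0)) \<Longrightarrow> computable n g \<Longrightarrow> computable n (\<lambda>xs. f (g xs))"
  by (drule c_app1) auto
lemma c_op2: "computable 2 (\<lambda>xs. f (xs!0) (xs!1)) \<Longrightarrow> computable n g \<Longrightarrow> computable n h \<Longrightarrow> computable n (\<lambda>xs. f (g xs) (h xs))"
  by (drule c_app2) auto
lemma c_op3: "computable 3 (\<lambda>xs. f (xs!0) (xs!1) (xs!2)) \<Longrightarrow> computable n g \<Longrightarrow> computable n h \<Longrightarrow> computable n k \<Longrightarrow> computable n (\<lambda>xs. f (g xs) (h xs) (k xs))"
  by (drule c_app3) auto

lemma map_nth_drop2: "length zs = Suc (Suc n) \<Longrightarrow> map (\<lambda>i. zs ! Suc (Suc i)) [0..<n] = drop 2 zs"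
  by (rule nth_equalityI) auto

lemma map_nth_id: "length xs = n \<Longrightarrow> map (\<lambda>i. xs ! i) [0..<n] = xs"
  by (rule nth_equalityI) auto

lemma c_rec:
  assumes B: "computable n B"
    and S: "computable (Suc (Suc n)) (\<lambda>zs. St (zs!0) (zs!1) (drop 2 zs))"
    and K: "computable n K"
    and R0: "\<And>ys. R 0 ys = B ys" and RS: "\<And>k ys. R (Suc k) ys = St k (R k ys) ys"
  shows "computable n (\<lambda>xs. R (K xs) xs)"
proof -
  have 1: "computable (Suc n) (\<lambda>xs. rec_nat (B (tl xs)) (\<lambda>k r. St ((k # r # tl xs)!0) ((k # r # tl xs)!1) (drop 2 (k # r # tl xs))) (hd xs))"
    by (rule c_prim[OF B S])
  have 2: "computable (Suc n) (\<lambda>xs. R (hd xs) (tl xs))"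
  proof (rule c_cong[OF 1])
    fix xs :: "nat list"
    show "rec_nat (B (tl xs)) (\<lambda>k r. St ((k # r # tl xs)!0) ((k # r # tl xs)!1) (drop 2 (k # r # tl xs))) (hd xs) = R (hd xs) (tl xs)"
    proof -
      have "\<And>m. rec_nat (B (tl xs)) (\<lambda>k r. St k r (tl xs)) m = R m (tl xs)"
        subgoal for m by (induction m) (auto simp: R0 RS)
        done
      then show ?thesis by simp
    qed
  qed
  have 3: "computable n (\<lambda>xs. (\<lambda>ys. R (hd ys) (tl ys)) (map (\<lambda>G. G xs) (K # map (\<lambda>i xs. xs ! i) [0..<n])))"
    by (rule c_comp[OF 2]) (auto intro: K c_nth)
  show ?thesis
    by (rule c_cong[OF 3]) (simp add: comp_def map_nth_id)
qed

lemma c_shift2: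
  assumes "computable (Suc n) (\<lambda>ys. F (hd ys) (tl ys))"
  shows "computable (Suc (Suc n)) (\<lambda>zs. F (zs!0) (drop 2 zs))"
proof -
  have 3: "computable (Suc (Suc n)) (\<lambda>xs. (\<lambda>ys. F (hd ys) (tl ys)) (map (\<lambda>G. G xs) ((\<lambda>zs. zs!0) # map (\<lambda>i zs. zs ! (i+2)) [0..<n])))"
    by (rule c_comp[OF assms]) (auto intro: c_nth)
  show ?thesis
    by (rule c_cong[OF 3]) (simp add: comp_def map_nth_drop2)
qed

fun foldk :: "(nat \<Rightarrow> nat \<Rightarrow> nat) \<Rightarrow> nat \<Rightarrow> nat \<Rightarrow> (nat \<Rightarrow> nat) \<Rightarrow> nat" where
  "foldk op b 0 F = b"
| "foldk op b (Suc k) F = op (foldk op b k F) (F k)"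

lemma c_fold:
  assumes op: "computable 2 (\<lambda>xs. op (xs!0) (xs!1))"
    and F: "computable (Suc n) (\<lambda>ys. F (hd ys) (tl ys))"
    and K: "computable n K"
  shows "computable n (\<lambda>xs. foldk op b (K xs) (\<lambda>k. F k xs))"
proof (rule c_rec[where R = "\<lambda>k ys. foldk op b k (\<lambda>j. F j ys)" and St = "\<lambda>k r ys. op r (F k ys)"])
  show "computable n (\<lambda>_. b)" by (rule c_const)
  show "computable (Suc (Suc n)) (\<lambda>zs. op (zs ! 1) (F (zs ! 0) (drop 2 zs)))"
    by (rule c_op2[OF op]) (auto intro: c_nth c_shift2[OF F])
qed (auto intro: K)

lemma c_drop2_nth: "Suc (Suc i) < n \<Longrightarrow> computable n (\<lambda>xs. drop 2 xs ! i)"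
  by (rule c_cong[OF c_nth[of "Suc (Suc i)" n]]) auto

lemmas cI0 = c_const c_nth c_drop2_nth

lemma c_succ': "computable n g \<Longrightarrow> computable n (\<lambda>xs. Suc (g xs))"
proof -
  have "computable 1 (\<lambda>xs. Suc (xs!0))" by (rule c_cong[OF c_succ]) (case_tac xs, auto)
  then show "computable n g \<Longrightarrow> computable n (\<lambda>xs. Suc (g xs))" by (rule c_op1[where f=Suc])
qed

lemma c_add2: "computable 2 (\<lambda>xs. xs!0 + xs!1)"
proof -
  have "computable 2 (\<lambda>xs. (\<lambda>k ys. k + ys!1) (xs!0) xs)"
    by (rule c_rec[where R="\<lambda>k ys. k + ys!1" and K="\<lambda>xs. xs!0" and B="\<lambda>ys. ys!1" and St="\<lambda>k r ys. Suc r"])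
       (auto intro!: c_nth c_succ')
  then show ?thesis by simp
qed

lemma c_add: "computable n g \<Longrightarrow> computable n h \<Longrightarrow> computable n (\<lambda>xs. g xs + h xs)"
  by (rule c_op2[where f="(+)", OF c_add2])

lemma c_mult2: "computable 2 (\<lambda>xs. xs!0 * xs!1)"
proof -
  have "computable 2 (\<lambda>xs. (\<lambda>k ys. k * ys!1) (xs!0) xs)"
    by (rule c_rec[where R="\<lambda>k ys. k * ys!1" and K="\<lambda>xs. xs!0" and B="\<lambda>ys. 0" and St="\<lambda>k r ys. r + ys!1"])
       (auto intro!: c_add cI0)
  then show ?thesis by simp
qed

lemma c_mult: "computable n g \<Longrightarrow> computable n h \<Longrightarrow> computable n (\<lambda>xs. g xs * h xs)"
  by (rule c_op2[where f="(*)", OF c_mult2])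

lemma c_pred1: "computable 1 (\<lambda>xs. xs!0 - 1)"
proof -
  have "computable 1 (\<lambda>xs. (\<lambda>k ys. k - 1) (xs!0) xs)"
    by (rule c_rec[where R="\<lambda>k ys. k - 1" and K="\<lambda>xs. xs!0" and B="\<lambda>ys. 0" and St="\<lambda>k r ys. k"])
       (auto intro!: c_nth c_const)
  then show ?thesis by simp
qed

lemma c_pred: "computable n g \<Longrightarrow> computable n (\<lambda>xs. g xs - 1)"
  by (rule c_op1[where f="\<lambda>a. a - 1", OF c_pred1])

lemma c_pred': "computable n g \<Longrightarrow> computable n (\<lambda>xs. g xs - Suc 0)"
  using c_pred by simp

lemma c_sub2: "computable 2 (\<lambda>xs. xs!0 - xs!1)"
proof -
  have "computable 2 (\<lambda>xs. (\<lambda>k ys. ys!0 - k) (xs!1) xs)"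
    by (rule c_rec[where R="\<lambda>k ys. ys!0 - k" and K="\<lambda>xs. xs!1" and B="\<lambda>ys. ys!0" and St="\<lambda>k r ys. r - 1"])
       (auto intro!: c_pred' cI0)
  then show ?thesis by simp
qed

lemma c_sub: "computable n g \<Longrightarrow> computable n h \<Longrightarrow> computable n (\<lambda>xs. g xs - h xs)"
  by (rule c_op2[where f="(-)", OF c_sub2])

definition cond :: "nat \<Rightarrow> nat \<Rightarrow> nat \<Rightarrow> nat" where
  "cond t x y = (if t = 0 then x else y)"

lemma c_cond3: "computable 3 (\<lambda>xs. cond (xs!0) (xs!1) (xs!2))"
proof -
  have "computable 3 (\<lambda>xs. (\<lambda>k ys. cond k (ys!1) (ys!2)) (xs!0) xs)"
    by (rule c_rec[where R="\<lambda>k ys. cond k (ys!1) (ys!2)" and K="\<lambda>xs. xs!0" and B="\<lambda>ys. ys!1" and St="\<lambda>k r ys. ys!2"])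
       (auto intro!: cI0 simp: cond_def)
  then show ?thesis by simp
qed

lemma c_cond: "computable n t \<Longrightarrow> computable n g \<Longrightarrow> computable n h \<Longrightarrow> computable n (\<lambda>xs. cond (t xs) (g xs) (h xs))"
  by (rule c_op3[where f="cond", OF c_cond3])

lemma c_mod2_1: "computable 1 (\<lambda>xs. xs!0 mod 2)"
proof -
  have "computable 1 (\<lambda>xs. (\<lambda>k ys. k mod 2) (xs!0) xs)"
    by (rule c_rec[where R="\<lambda>k ys. k mod 2" and K="\<lambda>xs. xs!0" and B="\<lambda>ys. 0" and St="\<lambda>k r ys. 1 - r"])
       (auto intro!: c_nth c_sub c_const simp: mod_Suc)
  then show ?thesis by simp
qed

lemma c_mod2: "computable n g \<Longrightarrow> computable n (\<lambda>xs. g xs mod 2)"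
  by (rule c_op1[where f="\<lambda>a. a mod 2", OF c_mod2_1])

lemma div2_Suc: "Suc k div 2 = k div 2 + k mod 2"
  by presburger

lemma c_div2_1: "computable 1 (\<lambda>xs. xs!0 div 2)"
proof -
  have "computable 1 (\<lambda>xs. (\<lambda>k ys. k div 2) (xs!0) xs)"
    by (rule c_rec[where R="\<lambda>k ys. k div 2" and K="\<lambda>xs. xs!0" and B="\<lambda>ys. 0" and St="\<lambda>k r ys. r + k mod 2"])
       (auto intro!: c_nth c_add c_mod2 c_const simp: div2_Suc)
  then show ?thesis by simp
qed

lemma c_div2: "computable n g \<Longrightarrow> computable n (\<lambda>xs. g xs div 2)"
  by (rule c_op1[where f="\<lambda>a. a div 2", OF c_div2_1])

lemma c_pow2_1: "computable 1 (\<lambda>xs. 2 ^ (xs!0))"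
proof -
  have "computable 1 (\<lambda>xs. (\<lambda>k ys. (2::nat) ^ k) (xs!0) xs)"
  proof (rule c_rec[where R="\<lambda>k ys. 2 ^ k" and K="\<lambda>xs. xs!0" and B="\<lambda>ys. 1" and St="\<lambda>k r ys. r + r"])
    show "computable (Suc (Suc 1)) (\<lambda>zs. zs ! 1 + zs ! 1)" by (intro c_add c_nth) auto
  qed (auto intro: c_nth c_const)
  then show ?thesis by simp
qed

lemma c_pow2: "computable n g \<Longrightarrow> computable n (\<lambda>xs. 2 ^ (g xs))"
  by (rule c_op1[where f="\<lambda>a. 2 ^ a", OF c_pow2_1])

lemma c_divpow2: "computable 2 (\<lambda>xs. xs!0 div 2 ^ (xs!1))"
proof -
  have "computable 2 (\<lambda>xs. (\<lambda>k ys. ys!0 div 2 ^ k) (xs!1) xs)"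
    apply (rule c_rec[where R="\<lambda>k ys. ys!0 div 2 ^ k" and K="\<lambda>xs. xs!1" and B="\<lambda>ys. ys!0" and St="\<lambda>k r ys. r div 2"])
       apply (rule c_nth; simp)
      apply (rule c_div2, rule c_nth, simp)
     apply (rule c_nth, simp)
    apply simp
   apply (metis div_mult2_eq power_Suc2)
  done
  then show ?thesis by simp
qed

definition bt :: "nat \<Rightarrow> nat \<Rightarrow> nat" where
  "bt c i = (c div 2 ^ i) mod 2"

lemma c_bt: "computable n g \<Longrightarrow> computable n h \<Longrightarrow> computable n (\<lambda>xs. bt (g xs) (h xs))"
  unfolding bt_def by (rule c_mod2, rule c_op2[where f="\<lambda>a b. a div 2 ^ b", OF c_divpow2])

lemma c_tri1: "computable 1 (\<lambda>xs. triangle (xs!0))"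
proof -
  have "computable 1 (\<lambda>xs. (\<lambda>k ys. triangle k) (xs!0) xs)"
    apply (rule c_rec[where R="\<lambda>k ys. triangle k" and K="\<lambda>xs. xs!0" and B="\<lambda>ys. 0" and St="\<lambda>k r ys. r + Suc k"])
       apply (rule c_const)
      apply (rule c_add, rule c_nth, simp, rule c_succ', rule c_nth, simp)
     apply (rule c_nth, simp)
    apply simp
   apply simp
  done
  then show ?thesis by simp
qed

definition pe :: "nat \<Rightarrow> nat \<Rightarrow> nat" where "pe a b = prod_encode (a, b)"

lemma c_pe: "computable n g \<Longrightarrow> computable n h \<Longrightarrow> computable n (\<lambda>xs. pe (g xs) (h xs))"
  unfolding pe_def prod_encode_def
  by (auto intro!: c_add c_op1[where f="triangle", OF c_tri1])

lemma hd_eq0: "0 < length xs \<Longrightarrow> hd xs = xs ! 0" by (cases xs) auto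
lemma hd_eq1: "1 < length xs \<Longrightarrow> hd (tl xs) = xs ! 1" by (cases xs; cases "tl xs") auto
lemma hd_eq2: "2 < length xs \<Longrightarrow> hd (tl (tl xs)) = xs ! 2"
  by (cases xs; cases "tl xs"; cases "tl (tl xs)") auto
lemma hd_eq3: "3 < length xs \<Longrightarrow> hd (tl (tl (tl xs))) = xs ! 3"
  by (cases xs; cases "tl xs"; cases "tl (tl xs)"; cases "tl (tl (tl xs))") (auto simp: numeral_eq_Suc)

lemma c_hd: "0 < n \<Longrightarrow> computable n (\<lambda>xs. hd xs)"
  by (rule c_cong[OF c_nth[of 0 n]]) (auto simp: hd_eq0)
lemma c_tl_nth: "Suc i < n \<Longrightarrow> computable n (\<lambda>xs. tl xs ! i)"
  by (rule c_cong[OF c_nth[of "Suc i" n]]) (auto simp: nth_tl)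
lemma c_tl_hd: "1 < n \<Longrightarrow> computable n (\<lambda>xs. hd (tl xs))"
  by (rule c_cong[OF c_nth[of 1 n]]) (auto simp: hd_eq1)
lemma c_tl2_nth: "Suc (Suc i) < n \<Longrightarrow> computable n (\<lambda>xs. tl (tl xs) ! i)"
  by (rule c_cong[OF c_nth[of "Suc (Suc i)" n]]) (auto simp: nth_tl)
lemma c_tl2_hd: "2 < n \<Longrightarrow> computable n (\<lambda>xs. hd (tl (tl xs)))"
  by (rule c_cong[OF c_nth[of 2 n]]) (auto simp: hd_eq2)
lemma c_tl3_nth: "Suc (Suc (Suc i)) < n \<Longrightarrow> computable n (\<lambda>xs. tl (tl (tl xs)) ! i)"
  by (rule c_cong[OF c_nth[of "Suc (Suc (Suc i))" n]]) (auto simp: nth_tl)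
lemma c_tl3_hd: "3 < n \<Longrightarrow> computable n (\<lambda>xs. hd (tl (tl (tl xs))))"
  by (rule c_cong[OF c_nth[of 3 n]]) (auto simp: hd_eq3)

lemmas cI = c_const c_nth c_hd c_tl_nth c_tl_hd c_tl2_nth c_tl2_hd c_tl3_nth c_tl3_hd
  c_add c_mult c_sub c_succ' c_cond c_bt c_pe c_pow2



definition fTrue :: fm where "fTrue = FImp FFalse FFalse"
definition fNeg :: "fm \<Rightarrow> fm" where "fNeg a = FImp a FFalse"
definition fAnd :: "fm \<Rightarrow> fm \<Rightarrow> fm" where "fAnd a b = fNeg (FImp a (fNeg b))"
definition fOr :: "fm \<Rightarrow> fm \<Rightarrow> fm" where "fOr a b = FImp (fNeg a) b"

fun bigAnd :: "nat \<Rightarrow> (nat \<Rightarrow> fm) \<Rightarrow> fm" where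
  "bigAnd 0 F = fTrue"
| "bigAnd (Suc k) F = fAnd (bigAnd k F) (F k)"

fun bigOr :: "nat \<Rightarrow> (nat \<Rightarrow> fm) \<Rightarrow> fm" where
  "bigOr 0 F = FFalse"
| "bigOr (Suc k) F = fOr (bigOr k F) (F k)"

fun allsfrom :: "nat \<Rightarrow> nat \<Rightarrow> fm \<Rightarrow> fm" where
  "allsfrom N 0 \<psi> = \<psi>"
| "allsfrom N (Suc j) \<psi> = FAll (N - Suc j) (allsfrom N j \<psi>)"

definition pc :: "nat \<Rightarrow> nat \<Rightarrow> nat" where "pc N S = (\<Sum>i<N. bt S i)"
definition tsub :: "nat \<Rightarrow> nat \<Rightarrow> nat \<Rightarrow> nat" where "tsub N S c = (\<Sum>i<N. bt S i * (1 - bt c i))"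
definition tdisj :: "nat \<Rightarrow> nat \<Rightarrow> nat \<Rightarrow> nat" where "tdisj N T c = (\<Sum>i<N. bt T i * bt c i)"
definition abN :: "enat \<Rightarrow> nat \<Rightarrow> nat" where "abN \<alpha> N = (case \<alpha> of enat a \<Rightarrow> a | \<infinity> \<Rightarrow> Suc N)"
definition tmeet :: "enat \<Rightarrow> nat \<Rightarrow> nat \<Rightarrow> nat \<Rightarrow> nat \<Rightarrow> nat" where
  "tmeet \<alpha> N c S m = (Suc (pc N S) - abN \<alpha> N) + tsub N S c + bt c m"
definition tjoin :: "enat \<Rightarrow> nat \<Rightarrow> nat \<Rightarrow> nat \<Rightarrow> nat \<Rightarrow> nat" where
  "tjoin \<beta> N c T m = (Suc (pc N T) - abN \<beta> N) + (1 - bt c m) + tdisj N T c"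
definition tord :: "nat \<Rightarrow> nat \<Rightarrow> nat \<Rightarrow> nat" where "tord c i j = (1 - bt c i) + bt c j"
definition tgood :: "nat \<Rightarrow> nat" where "tgood c = (1 - bt c 0) + bt c 1"

definition IsMeet :: "nat \<Rightarrow> nat \<Rightarrow> nat \<Rightarrow> fm" where
  "IsMeet N S m = fAnd (bigAnd N (\<lambda>s. if bt S s = 0 then fTrue else FLe m s))
     (FAll N (FImp (bigAnd N (\<lambda>s. if bt S s = 0 then fTrue else FLe N s)) (FLe N m)))"
definition IsJoin :: "nat \<Rightarrow> nat \<Rightarrow> nat \<Rightarrow> fm" where
  "IsJoin N T m = fAnd (bigAnd N (\<lambda>s. if bt T s = 0 then fTrue else FLe s m))
     (FAll N (FImp (bigAnd N (\<lambda>s. if bt T s = 0 then fTrue else FLe s N)) (FLe m N)))"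
definition Ords :: "nat \<Rightarrow> nat \<Rightarrow> fm" where
  "Ords N c = bigAnd N (\<lambda>i. bigAnd N (\<lambda>j. if tord c i j = 0 then fNeg (FLe i j) else fTrue))"
definition Meets :: "enat \<Rightarrow> nat \<Rightarrow> nat \<Rightarrow> fm" where
  "Meets \<alpha> N c = bigAnd (2^N) (\<lambda>S. bigAnd N (\<lambda>m. if tmeet \<alpha> N c S m = 0 then fNeg (IsMeet N S m) else fTrue))"
definition Joins :: "enat \<Rightarrow> nat \<Rightarrow> nat \<Rightarrow> fm" where
  "Joins \<beta> N c = bigAnd (2^N) (\<lambda>T. bigAnd N (\<lambda>m. if tjoin \<beta> N c T m = 0 then fNeg (IsJoin N T m) else fTrue))"
definition Good :: "enat \<Rightarrow> enat \<Rightarrow> nat \<Rightarrow> nat \<Rightarrow> fm" where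
  "Good \<alpha> \<beta> N c = (if tgood c = 0 then fAnd (fAnd (Ords N c) (Meets \<alpha> N c)) (Joins \<beta> N c) else FFalse)"
definition SatF :: "enat \<Rightarrow> enat \<Rightarrow> nat \<Rightarrow> fm" where
  "SatF \<alpha> \<beta> N = bigOr (2^N) (\<lambda>c. Good \<alpha> \<beta> N c)"
definition Phi :: "enat \<Rightarrow> enat \<Rightarrow> nat \<Rightarrow> fm" where
  "Phi \<alpha> \<beta> n = allsfrom (n+2) (n+2) (FImp (fNeg (FLe 0 1)) (SatF \<alpha> \<beta> (n+2)))"

section \<open>Encodings\<close>

definition eImp where "eImp a b = pe 3 (pe a b)"
definition eLe where "eLe i j = pe 0 (pe i j)"
definition eFalse where "eFalse = pe 2 0"
definition eAll where "eAll i a = pe 4 (pe i a)"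
definition eTrue where "eTrue = eImp eFalse eFalse"
definition eNeg where "eNeg a = eImp a eFalse"
definition eAnd where "eAnd a b = eNeg (eImp a (eNeg b))"
definition eOr where "eOr a b = eImp (eNeg a) b"

lemma enc_basic:
  "enc (FImp a b) = eImp (enc a) (enc b)" "enc (FLe i j) = eLe i j" "enc FFalse = eFalse"
  "enc (FAll i a) = eAll i (enc a)" "enc fTrue = eTrue" "enc (fNeg a) = eNeg (enc a)"
  "enc (fAnd a b) = eAnd (enc a) (enc b)" "enc (fOr a b) = eOr (enc a) (enc b)"
  by (simp_all add: eImp_def eLe_def eFalse_def eAll_def eTrue_def eNeg_def eAnd_def eOr_def
     fTrue_def fNeg_def fAnd_def fOr_def pe_def)

lemma enc_bigAnd: "enc (bigAnd k F) = foldk eAnd eTrue k (\<lambda>i. enc (F i))"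
  by (induction k) (simp_all add: enc_basic)
lemma enc_bigOr: "enc (bigOr k F) = foldk eOr eFalse k (\<lambda>i. enc (F i))"
  by (induction k) (simp_all add: enc_basic eFalse_def pe_def)
lemma enc_if: "enc (if t = 0 then X else Y) = cond t (enc X) (enc Y)"
  by (simp add: cond_def)

lemma sum_foldk: "(\<Sum>i<N. F i) = foldk (+) 0 N F"
  by (induction N) auto

lemma c_eImp: "computable n g \<Longrightarrow> computable n h \<Longrightarrow> computable n (\<lambda>xs. eImp (g xs) (h xs))"
  unfolding eImp_def by (intro c_pe c_const)
lemma c_eLe: "computable n g \<Longrightarrow> computable n h \<Longrightarrow> computable n (\<lambda>xs. eLe (g xs) (h xs))"
  unfolding eLe_def by (intro c_pe c_const)
lemma c_eAll: "computable n g \<Longrightarrow> computable n h \<Longrightarrow> computable n (\<lambda>xs. eAll (g xs) (h xs))"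
  unfolding eAll_def by (intro c_pe c_const)
lemma c_eNeg: "computable n g \<Longrightarrow> computable n (\<lambda>xs. eNeg (g xs))"
  unfolding eNeg_def by (intro c_eImp c_const)
lemma c_eAnd: "computable n g \<Longrightarrow> computable n h \<Longrightarrow> computable n (\<lambda>xs. eAnd (g xs) (h xs))"
  unfolding eAnd_def by (intro c_eImp c_eNeg)
lemma c_eOr: "computable n g \<Longrightarrow> computable n h \<Longrightarrow> computable n (\<lambda>xs. eOr (g xs) (h xs))"
  unfolding eOr_def by (intro c_eImp c_eNeg)

lemma c_fold_and: "computable (Suc n) (\<lambda>ys. F (hd ys) (tl ys)) \<Longrightarrow> computable n K \<Longrightarrow>
   computable n (\<lambda>xs. foldk eAnd eTrue (K xs) (\<lambda>k. F k xs))"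
  by (rule c_fold[where op=eAnd]) (auto intro!: c_eAnd c_nth)
lemma c_fold_or: "computable (Suc n) (\<lambda>ys. F (hd ys) (tl ys)) \<Longrightarrow> computable n K \<Longrightarrow>
   computable n (\<lambda>xs. foldk eOr eFalse (K xs) (\<lambda>k. F k xs))"
  by (rule c_fold[where op=eOr]) (auto intro!: c_eOr c_nth)
lemma c_fold_plus: "computable (Suc n) (\<lambda>ys. F (hd ys) (tl ys)) \<Longrightarrow> computable n K \<Longrightarrow>
   computable n (\<lambda>xs. foldk (+) 0 (K xs) (\<lambda>k. F k xs))"
  by (rule c_fold[where op="(+)"]) (auto intro!: c_add c_nth)

lemma c_abN: "computable n g \<Longrightarrow> computable n (\<lambda>xs. abN \<alpha> (g xs))"
  by (cases \<alpha>) (auto simp: abN_def intro: c_const c_succ')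

lemmas cJ = cI c_eImp c_eLe c_eAll c_eNeg c_eAnd c_eOr c_fold_and c_fold_or c_fold_plus c_abN

lemma c_pc2: "computable 2 (\<lambda>xs. pc (xs!0) (xs!1))"
  unfolding pc_def sum_foldk by (intro cJ; simp)
lemma c_pc: "computable n g \<Longrightarrow> computable n h \<Longrightarrow> computable n (\<lambda>xs. pc (g xs) (h xs))"
  by (rule c_op2[where f=pc, OF c_pc2])

lemma c_tsub3: "computable 3 (\<lambda>xs. tsub (xs!0) (xs!1) (xs!2))"
  unfolding tsub_def sum_foldk by (intro cJ; simp)
lemma c_tsub: "computable n g \<Longrightarrow> computable n h \<Longrightarrow> computable n k \<Longrightarrow> computable n (\<lambda>xs. tsub (g xs) (h xs) (k xs))"
  by (rule c_op3[where f=tsub, OF c_tsub3])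

lemma c_tdisj3: "computable 3 (\<lambda>xs. tdisj (xs!0) (xs!1) (xs!2))"
  unfolding tdisj_def sum_foldk by (intro cJ; simp)
lemma c_tdisj: "computable n g \<Longrightarrow> computable n h \<Longrightarrow> computable n k \<Longrightarrow> computable n (\<lambda>xs. tdisj (g xs) (h xs) (k xs))"
  by (rule c_op3[where f=tdisj, OF c_tdisj3])

lemma c_tord: "computable n g \<Longrightarrow> computable n h \<Longrightarrow> computable n k \<Longrightarrow> computable n (\<lambda>xs. tord (g xs) (h xs) (k xs))"
  unfolding tord_def by (intro cJ)
lemma c_tgood: "computable n g \<Longrightarrow> computable n (\<lambda>xs. tgood (g xs))"
  unfolding tgood_def by (intro cJ)

lemma c_tmeet4: "computable 4 (\<lambda>xs. tmeet \<alpha> (xs!0) (xs!1) (xs!2) (xs!3))"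
  unfolding tmeet_def by (intro cJ c_pc c_tsub; simp)
lemma c_tmeet: "computable n g \<Longrightarrow> computable n h \<Longrightarrow> computable n k \<Longrightarrow> computable n l \<Longrightarrow>
   computable n (\<lambda>xs. tmeet \<alpha> (g xs) (h xs) (k xs) (l xs))"
  using c_comp[of 4 "\<lambda>xs. tmeet \<alpha> (xs!0) (xs!1) (xs!2) (xs!3)" "[g,h,k,l]" n, OF c_tmeet4] by simp
lemma c_tjoin4: "computable 4 (\<lambda>xs. tjoin \<beta> (xs!0) (xs!1) (xs!2) (xs!3))"
  unfolding tjoin_def by (intro cJ c_pc c_tdisj; simp)
lemma c_tjoin: "computable n g \<Longrightarrow> computable n h \<Longrightarrow> computable n k \<Longrightarrow> computable n l \<Longrightarrow>
   computable n (\<lambda>xs. tjoin \<beta> (g xs) (h xs) (k xs) (l xs))"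
  using c_comp[of 4 "\<lambda>xs. tjoin \<beta> (xs!0) (xs!1) (xs!2) (xs!3)" "[g,h,k,l]" n, OF c_tjoin4] by simp

lemma c_IsMeet3: "computable 3 (\<lambda>xs. enc (IsMeet (xs!0) (xs!1) (xs!2)))"
  unfolding IsMeet_def by (simp only: enc_basic enc_bigAnd enc_if) (intro cJ; simp)
lemma c_IsMeet: "computable n g \<Longrightarrow> computable n h \<Longrightarrow> computable n k \<Longrightarrow> computable n (\<lambda>xs. enc (IsMeet (g xs) (h xs) (k xs)))"
  by (rule c_op3[where f="\<lambda>a b c. enc (IsMeet a b c)", OF c_IsMeet3])
lemma c_IsJoin3: "computable 3 (\<lambda>xs. enc (IsJoin (xs!0) (xs!1) (xs!2)))"
  unfolding IsJoin_def by (simp only: enc_basic enc_bigAnd enc_if) (intro cJ; simp)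
lemma c_IsJoin: "computable n g \<Longrightarrow> computable n h \<Longrightarrow> computable n k \<Longrightarrow> computable n (\<lambda>xs. enc (IsJoin (g xs) (h xs) (k xs)))"
  by (rule c_op3[where f="\<lambda>a b c. enc (IsJoin a b c)", OF c_IsJoin3])

lemma c_Ords2: "computable 2 (\<lambda>xs. enc (Ords (xs!0) (xs!1)))"
  unfolding Ords_def by (simp only: enc_basic enc_bigAnd enc_if) (intro cJ c_tord; simp)
lemma c_Meets2: "computable 2 (\<lambda>xs. enc (Meets \<alpha> (xs!0) (xs!1)))"
  unfolding Meets_def by (simp only: enc_basic enc_bigAnd enc_if) (intro cJ c_tmeet c_IsMeet; simp)
lemma c_Joins2: "computable 2 (\<lambda>xs. enc (Joins \<beta> (xs!0) (xs!1)))"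
  unfolding Joins_def by (simp only: enc_basic enc_bigAnd enc_if) (intro cJ c_tjoin c_IsJoin; simp)
lemma c_Good2: "computable 2 (\<lambda>xs. enc (Good \<alpha> \<beta> (xs!0) (xs!1)))"
  unfolding Good_def by (simp only: enc_basic enc_if)
    (intro cJ c_tgood c_op2[where f="\<lambda>a b. enc (Ords a b)", OF c_Ords2]
       c_op2[where f="\<lambda>a b. enc (Meets \<alpha> a b)", OF c_Meets2]
       c_op2[where f="\<lambda>a b. enc (Joins \<beta> a b)", OF c_Joins2]; simp)
lemma c_SatF1: "computable 1 (\<lambda>xs. enc (SatF \<alpha> \<beta> (xs!0)))"
  unfolding SatF_def by (simp only: enc_bigOr)
    (intro cJ c_op2[where f="\<lambda>a b. enc (Good \<alpha> \<beta> a b)", OF c_Good2]; simp)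

fun ealls :: "nat \<Rightarrow> nat \<Rightarrow> nat \<Rightarrow> nat" where
  "ealls N 0 e = e"
| "ealls N (Suc j) e = eAll (N - Suc j) (ealls N j e)"

lemma enc_allsfrom: "enc (allsfrom N j \<psi>) = ealls N j (enc \<psi>)"
  by (induction j) (simp_all add: eAll_def pe_def)

lemma c_ealls3: "computable 3 (\<lambda>xs. ealls (xs!0) (xs!1) (xs!2))"
proof -
  have "computable 3 (\<lambda>xs. (\<lambda>j ys. ealls (ys!0) j (ys!2)) (xs!1) xs)"
    apply (rule c_rec[where R="\<lambda>j ys. ealls (ys!0) j (ys!2)" and K="\<lambda>xs. xs!1" and B="\<lambda>ys. ys!2"
          and St="\<lambda>k r ys. eAll (ys!0 - Suc k) r"])
        apply (intro cJ c_drop2_nth; simp)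
       apply (intro cJ c_drop2_nth; simp)
      apply (intro cJ c_drop2_nth; simp)
     apply simp
    apply simp
    done
  then show ?thesis by simp
qed

lemma c_Phi1: "computable 1 (\<lambda>xs. enc (Phi \<alpha> \<beta> (xs!0)))"
  unfolding Phi_def by (simp only: enc_allsfrom enc_basic)
    (intro cJ c_op3[where f=ealls, OF c_ealls3] c_op1[where f="\<lambda>a. enc (SatF \<alpha> \<beta> a)", OF c_SatF1]; simp)

lemma c_Phi: "computable n g \<Longrightarrow> computable n (\<lambda>xs. enc (Phi \<alpha> \<beta> (g xs)))"
  by (rule c_op1[where f="\<lambda>a. enc (Phi \<alpha> \<beta> a)", OF c_Phi1])

fun Dr :: "(nat \<Rightarrow> nat) \<Rightarrow> nat \<Rightarrow> nat \<Rightarrow> nat" where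
  "Dr E 0 x = 1"
| "Dr E (Suc k) x = cond ((E k - x) + (x - E k)) 0 (Dr E k x)"

lemma Dr_iff: "Dr E k x = 0 \<longleftrightarrow> (\<exists>i<k. E i = x)"
  by (induction k) (auto simp: cond_def less_Suc_eq)

lemma c_D: "computable 1 (\<lambda>xs. Dr (\<lambda>n. enc (Phi \<alpha> \<beta> n)) (Suc (xs!0)) (xs!0))"
proof -
  have "computable 1 (\<lambda>xs. (\<lambda>k ys. Dr (\<lambda>n. enc (Phi \<alpha> \<beta> n)) k (ys!0)) (Suc (xs!0)) xs)"
    apply (rule c_rec[where R="\<lambda>k ys. Dr (\<lambda>n. enc (Phi \<alpha> \<beta> n)) k (ys!0)" and K="\<lambda>xs. Suc (xs!0)" and B="\<lambda>ys. 1"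
          and St="\<lambda>k r ys. cond ((enc (Phi \<alpha> \<beta> k) - ys!0) + (ys!0 - enc (Phi \<alpha> \<beta> k))) 0 r"])
        apply (intro cJ c_drop2_nth c_Phi; simp)
       apply (intro cJ c_drop2_nth c_Phi; simp)
      apply (intro cJ c_drop2_nth c_Phi; simp)
     apply simp
    apply simp
    done
  then show ?thesis by simp
qed

lemma triangle_ge: "n \<le> triangle n"
  by (induction n) auto

lemma pe4_gt: "b < pe 4 b"
proof -
  have "4 + b \<le> triangle (4 + b)" by (rule triangle_ge)
  then show ?thesis by (simp add: pe_def prod_encode_def)
qed

lemma ealls_ge: "j \<le> ealls N j e"
proof (induction j)
  case (Suc j)
  have "ealls N j e \<le> pe (N - Suc j) (ealls N j e)" unfolding pe_def by (rule le_prod_encode_2)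
  also have "\<dots> < pe 4 (pe (N - Suc j) (ealls N j e))" by (rule pe4_gt)
  finally show ?case using Suc by (simp add: eAll_def)
qed simp

lemma Phi_ge: "n \<le> enc (Phi \<alpha> \<beta> n)"
proof -
  have "n + 2 \<le> enc (Phi \<alpha> \<beta> n)"
    unfolding Phi_def enc_allsfrom by (rule ealls_ge)
  then show ?thesis by simp
qed

lemma recursive_Phi: "recursive_fmset (range (Phi \<alpha> \<beta>))"
proof -
  obtain f where f: "recfn 1 f" "\<forall>xs. length xs = 1 \<longrightarrow> f xs = Dr (\<lambda>n. enc (Phi \<alpha> \<beta> n)) (Suc (xs!0)) (xs!0)"
    using c_D[of \<alpha> \<beta>] unfolding computable_def by blast
  have "\<forall>x. x \<in> enc ` range (Phi \<alpha> \<beta>) \<longleftrightarrow> f [x] = 0"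
  proof
    fix x
    have "f [x] = Dr (\<lambda>n. enc (Phi \<alpha> \<beta> n)) (Suc x) x" using f(2) by (metis length_Cons list.size(3) nth_Cons_0 One_nat_def)
    then have "f [x] = 0 \<longleftrightarrow> (\<exists>i<Suc x. enc (Phi \<alpha> \<beta> i) = x)" by (simp only: Dr_iff)
    also have "\<dots> \<longleftrightarrow> x \<in> enc ` range (Phi \<alpha> \<beta>)"
      using Phi_ge[of _ \<alpha> \<beta>] by (auto simp: less_Suc_eq_le)
    finally show "x \<in> enc ` range (Phi \<alpha> \<beta>) \<longleftrightarrow> f [x] = 0" by simp
  qed
  then show ?thesis unfolding recursive_fmset_def recursive_set_def using f(1) by blast
qed



section \<open>Free variables\<close>

lemma fv_basic[simp]: "freevars fTrue = {}" "freevars (fNeg a) = freevars a"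
  "freevars (fAnd a b) = freevars a \<union> freevars b" "freevars (fOr a b) = freevars a \<union> freevars b"
  by (auto simp: fTrue_def fNeg_def fAnd_def fOr_def)

lemma fv_bigAnd: "freevars (bigAnd k F) = (\<Union>i<k. freevars (F i))"
  by (induction k) (auto simp: lessThan_Suc)
lemma fv_bigOr: "freevars (bigOr k F) = (\<Union>i<k. freevars (F i))"
  by (induction k) (auto simp: lessThan_Suc)

lemma fv_if: "freevars (if P then X else Y) = (if P then freevars X else freevars Y)"
  by simp

lemma fv_IsMeet: "m < N \<Longrightarrow> freevars (IsMeet N S m) \<subseteq> {..<N}"
  unfolding IsMeet_def by (auto simp: fv_bigAnd fv_if split: if_splits)
lemma fv_IsJoin: "m < N \<Longrightarrow> freevars (IsJoin N S m) \<subseteq> {..<N}"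
  unfolding IsJoin_def by (auto simp: fv_bigAnd fv_if split: if_splits)

lemma fv_SatF: "freevars (SatF \<alpha> \<beta> N) \<subseteq> {..<N}"
proof -
  have o: "freevars (Ords N c) \<subseteq> {..<N}" for c
    unfolding Ords_def by (auto simp: fv_bigAnd fv_if split: if_splits)
  have m: "freevars (Meets \<alpha> N c) \<subseteq> {..<N}" for c
    unfolding Meets_def using fv_IsMeet by (fastforce simp: fv_bigAnd fv_if split: if_splits)
  have j: "freevars (Joins \<beta> N c) \<subseteq> {..<N}" for c
    unfolding Joins_def using fv_IsJoin by (fastforce simp: fv_bigAnd fv_if split: if_splits)
  have g: "freevars (Good \<alpha> \<beta> N c) \<subseteq> {..<N}" for c
    unfolding Good_def using o[of c] m[of c] j[of c] by auto
  show ?thesis unfolding SatF_def fv_bigOr using g by blast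
qed

lemma fv_allsfrom: "j \<le> N \<Longrightarrow> freevars (allsfrom N j \<psi>) = freevars \<psi> - {N - j..<N}"
proof (induction j)
  case (Suc j)
  have 1: "freevars (allsfrom N (Suc j) \<psi>) = (freevars \<psi> - {N-j..<N}) - {N - Suc j}"
    using Suc by simp
  have 2: "{N - Suc j..<N} = insert (N - Suc j) {N-j..<N}" using Suc.prems by fastforce
  show ?case unfolding 1 2 by blast
qed simp

lemma sentence_Phi: "sentence (Phi \<alpha> \<beta> n)"
proof -
  have "freevars (FImp (fNeg (FLe 0 1)) (SatF \<alpha> \<beta> (n+2))) \<subseteq> {..<n+2}"
    using fv_SatF[of \<alpha> \<beta> "n+2"] by auto
  then show ?thesis unfolding sentence_def Phi_def by (auto simp: fv_allsfrom)
qed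

section \<open>Satisfaction\<close>

lemma sat_basic[simp]: "sat A le e fTrue" "sat A le e (fNeg a) = (\<not> sat A le e a)"
  "sat A le e (fAnd a b) = (sat A le e a \<and> sat A le e b)"
  "sat A le e (fOr a b) = (sat A le e a \<or> sat A le e b)"
  by (auto simp: fTrue_def fNeg_def fAnd_def fOr_def)

lemma sat_bigAnd[simp]: "sat A le e (bigAnd k F) = (\<forall>i<k. sat A le e (F i))"
  by (induction k) (auto simp: less_Suc_eq)
lemma sat_bigOr[simp]: "sat A le e (bigOr k F) = (\<exists>i<k. sat A le e (F i))"
  by (induction k) (auto simp: less_Suc_eq)
lemma sat_if[simp]: "sat A le e (if P then X else Y) = (if P then sat A le e X else sat A le e Y)"
  by simp

lemma sat_IsMeet: "m < N \<Longrightarrow> sat A le e (IsMeet N S m) \<longleftrightarrow>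
   (\<forall>s<N. bt S s \<noteq> 0 \<longrightarrow> le (e m) (e s)) \<and> (\<forall>w\<in>A. (\<forall>s<N. bt S s \<noteq> 0 \<longrightarrow> le w (e s)) \<longrightarrow> le w (e m))"
  unfolding IsMeet_def by auto
lemma sat_IsJoin: "m < N \<Longrightarrow> sat A le e (IsJoin N S m) \<longleftrightarrow>
   (\<forall>s<N. bt S s \<noteq> 0 \<longrightarrow> le (e s) (e m)) \<and> (\<forall>w\<in>A. (\<forall>s<N. bt S s \<noteq> 0 \<longrightarrow> le (e s) w) \<longrightarrow> le (e m) w)"
  unfolding IsJoin_def by auto

lemma sat_allsfrom: "j \<le> N \<Longrightarrow> sat A le e (allsfrom N j \<psi>) \<longleftrightarrow>
   (\<forall>f. (\<forall>i\<in>{N-j..<N}. f i \<in> A) \<longrightarrow> sat A le (\<lambda>i. if N - j \<le> i \<and> i < N then f i else e i) \<psi>)"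
proof (induction j arbitrary: e)
  case 0
  have "(\<lambda>i. if N \<le> i \<and> i < N then f i else e i) = e" for f by (rule ext) auto
  then show ?case by simp
next
  case (Suc j)
  let ?k = "N - Suc j"
  have k: "N - j = Suc ?k" using Suc.prems by simp
  have "sat A le e (allsfrom N (Suc j) \<psi>) \<longleftrightarrow> (\<forall>x\<in>A. sat A le (e(?k := x)) (allsfrom N j \<psi>))"
    by simp
  also have "\<dots> \<longleftrightarrow> (\<forall>x\<in>A. \<forall>f. (\<forall>i\<in>{N-j..<N}. f i \<in> A) \<longrightarrow>
      sat A le (\<lambda>i. if N - j \<le> i \<and> i < N then f i else (e(?k := x)) i) \<psi>)"
    using Suc by simp
  also have "\<dots> \<longleftrightarrow> (\<forall>f. (\<forall>i\<in>{N-Suc j..<N}. f i \<in> A) \<longrightarrow>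
      sat A le (\<lambda>i. if N - Suc j \<le> i \<and> i < N then f i else e i) \<psi>)"
  proof
    assume H: "\<forall>x\<in>A. \<forall>f. (\<forall>i\<in>{N-j..<N}. f i \<in> A) \<longrightarrow>
      sat A le (\<lambda>i. if N - j \<le> i \<and> i < N then f i else (e(?k := x)) i) \<psi>"
    show "\<forall>f. (\<forall>i\<in>{N-Suc j..<N}. f i \<in> A) \<longrightarrow>
      sat A le (\<lambda>i. if N - Suc j \<le> i \<and> i < N then f i else e i) \<psi>"
    proof (intro allI impI)
      fix f assume f: "\<forall>i\<in>{N-Suc j..<N}. f i \<in> A"
      have "f ?k \<in> A" using f Suc.prems by auto
      moreover have "\<forall>i\<in>{N-j..<N}. f i \<in> A" using f by auto
      ultimately have "sat A le (\<lambda>i. if N - j \<le> i \<and> i < N then f i else (e(?k := f ?k)) i) \<psi>"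
        using H by blast
      moreover have "(\<lambda>i. if N - j \<le> i \<and> i < N then f i else (e(?k := f ?k)) i) =
          (\<lambda>i. if N - Suc j \<le> i \<and> i < N then f i else e i)"
        using k Suc.prems by (auto simp: fun_eq_iff)
      ultimately show "sat A le (\<lambda>i. if N - Suc j \<le> i \<and> i < N then f i else e i) \<psi>" by simp
    qed
  next
    assume H: "\<forall>f. (\<forall>i\<in>{N-Suc j..<N}. f i \<in> A) \<longrightarrow>
      sat A le (\<lambda>i. if N - Suc j \<le> i \<and> i < N then f i else e i) \<psi>"
    show "\<forall>x\<in>A. \<forall>f. (\<forall>i\<in>{N-j..<N}. f i \<in> A) \<longrightarrow>
      sat A le (\<lambda>i. if N - j \<le> i \<and> i < N then f i else (e(?k := x)) i) \<psi>"
    proof (intro ballI allI impI)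
      fix x f assume x: "x \<in> A" and f: "\<forall>i\<in>{N-j..<N}. f i \<in> A"
      have "\<forall>i\<in>{N-Suc j..<N}. (f(?k := x)) i \<in> A" using f x k by auto
      then have "sat A le (\<lambda>i. if N - Suc j \<le> i \<and> i < N then (f(?k := x)) i else e i) \<psi>"
        using H by blast
      moreover have "(\<lambda>i. if N - Suc j \<le> i \<and> i < N then (f(?k := x)) i else e i) =
          (\<lambda>i. if N - j \<le> i \<and> i < N then f i else (e(?k := x)) i)"
        using k Suc.prems by (auto simp: fun_eq_iff)
      ultimately show "sat A le (\<lambda>i. if N - j \<le> i \<and> i < N then f i else (e(?k := x)) i) \<psi>" by simp
    qed
  qed
  finally show ?case .
qed



lemma bt_le1: "bt c i \<le> 1"
  unfolding bt_def by simp

lemma bt_cases: "bt c i = 0 \<or> bt c i = 1"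
  using bt_le1[of c i] by linarith

lemma pc_card: "pc N S = card {s. s < N \<and> bt S s \<noteq> 0}"
proof (induction N)
  case 0 then show ?case by (simp add: pc_def)
next
  case (Suc N)
  have e: "pc (Suc N) S = pc N S + bt S N" by (simp add: pc_def)
  show ?case
  proof (cases "bt S N = 0")
    case True
    have "{s. s < Suc N \<and> bt S s \<noteq> 0} = {s. s < N \<and> bt S s \<noteq> 0}"
      using True by (auto simp: less_Suc_eq)
    then show ?thesis using e True Suc.IH by simp
  next
    case False
    then have b: "bt S N = 1" using bt_cases[of S N] by simp
    have "{s. s < Suc N \<and> bt S s \<noteq> 0} = insert N {s. s < N \<and> bt S s \<noteq> 0}"
      using False by (auto simp: less_Suc_eq)
    moreover have "card (insert N {s. s < N \<and> bt S s \<noteq> 0}) = Suc (card {s. s < N \<and> bt S s \<noteq> 0})"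
      by (rule card_insert_disjoint) auto
    ultimately show ?thesis using e b Suc.IH by simp
  qed
qed

lemma pc_le: "pc N S \<le> N"
proof -
  have "card {s. s < N \<and> bt S s \<noteq> 0} \<le> card {..<N}" by (rule card_mono) auto
  then show ?thesis by (simp add: pc_card)
qed

lemma tsub_0: "tsub N S c = 0 \<longleftrightarrow> (\<forall>i<N. bt S i \<noteq> 0 \<longrightarrow> bt c i \<noteq> 0)"
proof -
  have "tsub N S c = 0 \<longleftrightarrow> (\<forall>i\<in>{..<N}. bt S i * (1 - bt c i) = 0)"
    unfolding tsub_def by (rule sum_eq_0_iff) simp
  also have "\<dots> \<longleftrightarrow> (\<forall>i<N. bt S i \<noteq> 0 \<longrightarrow> bt c i \<noteq> 0)"
  proof -
    have "bt S i * (1 - bt c i) = 0 \<longleftrightarrow> (bt S i \<noteq> 0 \<longrightarrow> bt c i \<noteq> 0)" for i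
      using bt_cases[of c i] by auto
    then show ?thesis by auto
  qed
  finally show ?thesis .
qed

lemma tdisj_0: "tdisj N T c = 0 \<longleftrightarrow> (\<forall>i<N. bt T i \<noteq> 0 \<longrightarrow> bt c i = 0)"
proof -
  have "tdisj N T c = 0 \<longleftrightarrow> (\<forall>i\<in>{..<N}. bt T i * bt c i = 0)"
    unfolding tdisj_def by (rule sum_eq_0_iff) simp
  also have "\<dots> \<longleftrightarrow> (\<forall>i<N. bt T i \<noteq> 0 \<longrightarrow> bt c i = 0)"
    by (metis lessThan_iff mult_eq_0_iff)
  finally show ?thesis .
qed

lemma abN_iff: "p \<le> N \<Longrightarrow> (p < abN \<alpha> N \<longleftrightarrow> enat p < \<alpha>)"
  by (cases \<alpha>) (auto simp: abN_def)

lemma tmeet_0: "tmeet \<alpha> N c S m = 0 \<longleftrightarrow> enat (pc N S) < \<alpha> \<and> (\<forall>i<N. bt S i \<noteq> 0 \<longrightarrow> bt c i \<noteq> 0) \<and> bt c m = 0"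
  using abN_iff[OF pc_le, of N S \<alpha>] tsub_0[of N S c] by (auto simp: tmeet_def)

lemma tjoin_0: "tjoin \<beta> N c T m = 0 \<longleftrightarrow> enat (pc N T) < \<beta> \<and> bt c m \<noteq> 0 \<and> (\<forall>i<N. bt T i \<noteq> 0 \<longrightarrow> bt c i = 0)"
  using abN_iff[OF pc_le, of N T \<beta>] tdisj_0[of N T c] bt_cases[of c m] by (auto simp: tjoin_def)

lemma tord_0: "tord c i j = 0 \<longleftrightarrow> bt c i \<noteq> 0 \<and> bt c j = 0"
  using bt_cases[of c i] by (auto simp: tord_def)

lemma tgood_0: "tgood c = 0 \<longleftrightarrow> bt c 0 \<noteq> 0 \<and> bt c 1 = 0"
  using bt_cases[of c 0] by (auto simp: tgood_def)

lemma bt_small: "S < 2 ^ N \<Longrightarrow> N \<le> i \<Longrightarrow> bt S i = 0"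
proof -
  assume a: "S < 2 ^ N" "N \<le> i"
  have "(2::nat) ^ N \<le> 2 ^ i" using a(2) by (simp add: power_increasing)
  then have "S div 2 ^ i = 0" using a(1) by (intro div_less) linarith
  then show ?thesis by (simp add: bt_def)
qed

lemma bt_add_pow: "S < 2 ^ N \<Longrightarrow> i \<le> N \<Longrightarrow> bt (S + 2 ^ N) i = (if i = N then 1 else bt S i)"
proof -
  assume a: "S < 2 ^ N" "i \<le> N"
  have p: "(2::nat) ^ N = 2 ^ (N - i) * 2 ^ i" using a(2) by (simp add: power_add[symmetric])
  have "(S + 2 ^ N) div 2 ^ i = S div 2 ^ i + 2 ^ (N - i)"
    unfolding p by simp
  then have d: "bt (S + 2 ^ N) i = (S div 2 ^ i + 2 ^ (N - i)) mod 2" by (simp add: bt_def)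
  show ?thesis
  proof (cases "i = N")
    case True
    then show ?thesis using d a(1) by simp
  next
    case False
    then have "even ((2::nat) ^ (N - i))" using a(2) by simp
    then obtain k where k: "(2::nat) ^ (N - i) = 2 * k" by blast
    have "(S div 2 ^ i + 2 * k) mod 2 = S div 2 ^ i mod 2" by simp
    then show ?thesis using d False k by (simp add: bt_def)
  qed
qed

lemma mask_exists: "SS \<subseteq> {..<N} \<Longrightarrow> \<exists>S<2^N. \<forall>i<N. bt S i \<noteq> 0 \<longleftrightarrow> i \<in> SS"
proof (induction N arbitrary: SS)
  case 0 then show ?case by auto
next
  case (Suc N)
  have "SS - {N} \<subseteq> {..<N}" using Suc.prems by (auto simp: less_Suc_eq)
  then obtain S' where S': "S' < 2^N" "\<forall>i<N. bt S' i \<noteq> 0 \<longleftrightarrow> i \<in> SS - {N}"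
    using Suc.IH[of "SS - {N}"] by blast
  show ?case
  proof (cases "N \<in> SS")
    case True
    show ?thesis
      apply (rule exI[of _ "S' + 2^N"])
      using S' True bt_add_pow[OF S'(1)] by (auto simp: less_Suc_eq)
  next
    case False
    show ?thesis
      apply (rule exI[of _ "S'"])
      using S' False bt_small[OF S'(1)] by (auto simp: less_Suc_eq)
  qed
qed

definition GoodCol :: "nat set \<Rightarrow> (nat \<Rightarrow> nat \<Rightarrow> bool) \<Rightarrow> enat \<Rightarrow> enat \<Rightarrow> (nat \<Rightarrow> nat) \<Rightarrow> nat \<Rightarrow> (nat \<Rightarrow> bool) \<Rightarrow> bool" where
  "GoodCol A le \<alpha> \<beta> e N col \<longleftrightarrow> col 0 \<and> \<not> col 1 \<and>
    (\<forall>i<N. \<forall>j<N. col i \<and> le (e i) (e j) \<longrightarrow> col j) \<and>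
    (\<forall>SS. SS \<subseteq> {..<N} \<and> enat (card SS) < \<alpha> \<longrightarrow> (\<forall>m<N. (\<forall>s\<in>SS. col s) \<and> is_meet A le (e ` SS) (e m) \<longrightarrow> col m)) \<and>
    (\<forall>TT. TT \<subseteq> {..<N} \<and> enat (card TT) < \<beta> \<longrightarrow> (\<forall>m<N. col m \<and> is_join A le (e ` TT) (e m) \<longrightarrow> (\<exists>t\<in>TT. col t)))"

lemma is_meet_idx: "e m \<in> A \<Longrightarrow> is_meet A le (e ` {s. s < N \<and> bt S s \<noteq> 0}) (e m) \<longleftrightarrow>
   (\<forall>s<N. bt S s \<noteq> 0 \<longrightarrow> le (e m) (e s)) \<and> (\<forall>w\<in>A. (\<forall>s<N. bt S s \<noteq> 0 \<longrightarrow> le w (e s)) \<longrightarrow> le w (e m))"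
  unfolding is_meet_def by auto
lemma is_join_idx: "e m \<in> A \<Longrightarrow> is_join A le (e ` {s. s < N \<and> bt S s \<noteq> 0}) (e m) \<longleftrightarrow>
   (\<forall>s<N. bt S s \<noteq> 0 \<longrightarrow> le (e s) (e m)) \<and> (\<forall>w\<in>A. (\<forall>s<N. bt S s \<noteq> 0 \<longrightarrow> le (e s) w) \<longrightarrow> le (e m) w)"
  unfolding is_join_def by auto

lemma sat_Ords: "sat A le e (Ords N c) \<longleftrightarrow> (\<forall>i<N. \<forall>j<N. bt c i \<noteq> 0 \<and> bt c j = 0 \<longrightarrow> \<not> le (e i) (e j))"
  unfolding Ords_def by (auto simp: tord_0)

lemma sat_Meets: "\<forall>i<N. e i \<in> A \<Longrightarrow> sat A le e (Meets \<alpha> N c) \<longleftrightarrow>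
  (\<forall>S<2^N. \<forall>m<N. enat (pc N S) < \<alpha> \<and> (\<forall>i<N. bt S i \<noteq> 0 \<longrightarrow> bt c i \<noteq> 0) \<and> bt c m = 0 \<longrightarrow>
      \<not> is_meet A le (e ` {s. s < N \<and> bt S s \<noteq> 0}) (e m))"
proof -
  assume eA: "\<forall>i<N. e i \<in> A"
  have 1: "sat A le e (Meets \<alpha> N c) \<longleftrightarrow> (\<forall>S<2^N. \<forall>m<N. tmeet \<alpha> N c S m = 0 \<longrightarrow> \<not> sat A le e (IsMeet N S m))"
    unfolding Meets_def by auto
  have 2: "m < N \<Longrightarrow> sat A le e (IsMeet N S m) \<longleftrightarrow> is_meet A le (e ` {s. s < N \<and> bt S s \<noteq> 0}) (e m)" for m S
    using sat_IsMeet[of m N A le e S] is_meet_idx[of e m A le N S] eA by simp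
  show ?thesis unfolding 1 tmeet_0 using 2 by blast
qed

lemma sat_Joins: "\<forall>i<N. e i \<in> A \<Longrightarrow> sat A le e (Joins \<beta> N c) \<longleftrightarrow>
  (\<forall>T<2^N. \<forall>m<N. enat (pc N T) < \<beta> \<and> bt c m \<noteq> 0 \<and> (\<forall>i<N. bt T i \<noteq> 0 \<longrightarrow> bt c i = 0) \<longrightarrow>
      \<not> is_join A le (e ` {s. s < N \<and> bt T s \<noteq> 0}) (e m))"
proof -
  assume eA: "\<forall>i<N. e i \<in> A"
  have 1: "sat A le e (Joins \<beta> N c) \<longleftrightarrow> (\<forall>S<2^N. \<forall>m<N. tjoin \<beta> N c S m = 0 \<longrightarrow> \<not> sat A le e (IsJoin N S m))"
    unfolding Joins_def by auto
  have 2: "m < N \<Longrightarrow> sat A le e (IsJoin N S m) \<longleftrightarrow> is_join A le (e ` {s. s < N \<and> bt S s \<noteq> 0}) (e m)" for m S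
    using sat_IsJoin[of m N A le e S] is_join_idx[of e m A le N S] eA by simp
  show ?thesis unfolding 1 tjoin_0 using 2 by blast
qed



lemma GC_D:
  assumes "GoodCol A le \<alpha> \<beta> e N col"
  shows "col 0" "\<not> col 1"
    "\<And>i j. i < N \<Longrightarrow> j < N \<Longrightarrow> col i \<Longrightarrow> le (e i) (e j) \<Longrightarrow> col j"
    "\<And>SS m. SS \<subseteq> {..<N} \<Longrightarrow> enat (card SS) < \<alpha> \<Longrightarrow> m < N \<Longrightarrow> \<forall>s\<in>SS. col s \<Longrightarrow>
        is_meet A le (e ` SS) (e m) \<Longrightarrow> col m"
    "\<And>TT m. TT \<subseteq> {..<N} \<Longrightarrow> enat (card TT) < \<beta> \<Longrightarrow> m < N \<Longrightarrow> col m \<Longrightarrow>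
        is_join A le (e ` TT) (e m) \<Longrightarrow> \<exists>t\<in>TT. col t"
proof -
  have a: "col 0 \<and> \<not> col 1 \<and>
    (\<forall>i<N. \<forall>j<N. col i \<and> le (e i) (e j) \<longrightarrow> col j) \<and>
    (\<forall>SS. SS \<subseteq> {..<N} \<and> enat (card SS) < \<alpha> \<longrightarrow> (\<forall>m<N. (\<forall>s\<in>SS. col s) \<and> is_meet A le (e ` SS) (e m) \<longrightarrow> col m)) \<and>
    (\<forall>TT. TT \<subseteq> {..<N} \<and> enat (card TT) < \<beta> \<longrightarrow> (\<forall>m<N. col m \<and> is_join A le (e ` TT) (e m) \<longrightarrow> (\<exists>t\<in>TT. col t)))"
    using assms unfolding GoodCol_def .
  then show "col 0" "\<not> col 1" by simp_all
  show "\<And>i j. i < N \<Longrightarrow> j < N \<Longrightarrow> col i \<Longrightarrow> le (e i) (e j) \<Longrightarrow> col j"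
  proof -
    fix i j assume h: "i < N" "j < N" "col i" "le (e i) (e j)"
    have o: "\<forall>i<N. \<forall>j<N. col i \<and> le (e i) (e j) \<longrightarrow> col j" using a by (elim conjE)
    show "col j" using o[rule_format, OF h(1) h(2)] h(3,4) by simp
  qed
  show "\<And>SS m. SS \<subseteq> {..<N} \<Longrightarrow> enat (card SS) < \<alpha> \<Longrightarrow> m < N \<Longrightarrow> \<forall>s\<in>SS. col s \<Longrightarrow>
        is_meet A le (e ` SS) (e m) \<Longrightarrow> col m"
  proof -
    fix SS m assume "SS \<subseteq> {..<N}" "enat (card SS) < \<alpha>" "m < N" "\<forall>s\<in>SS. col s" "is_meet A le (e ` SS) (e m)"
    moreover have "\<forall>SS. SS \<subseteq> {..<N} \<and> enat (card SS) < \<alpha> \<longrightarrow> (\<forall>m<N. (\<forall>s\<in>SS. col s) \<and> is_meet A le (e ` SS) (e m) \<longrightarrow> col m)"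
      using a by (elim conjE)
    ultimately show "col m" by (meson order_refl)
  qed
  show "\<And>TT m. TT \<subseteq> {..<N} \<Longrightarrow> enat (card TT) < \<beta> \<Longrightarrow> m < N \<Longrightarrow> col m \<Longrightarrow>
        is_join A le (e ` TT) (e m) \<Longrightarrow> \<exists>t\<in>TT. col t"
  proof -
    fix TT m assume "TT \<subseteq> {..<N}" "enat (card TT) < \<beta>" "m < N" "col m" "is_join A le (e ` TT) (e m)"
    moreover have "\<forall>TT. TT \<subseteq> {..<N} \<and> enat (card TT) < \<beta> \<longrightarrow> (\<forall>m<N. col m \<and> is_join A le (e ` TT) (e m) \<longrightarrow> (\<exists>t\<in>TT. col t))"
      using a by (elim conjE)
    ultimately show "\<exists>t\<in>TT. col t" by (meson order_refl)
  qed
qed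

lemma sat_SatF:
  assumes N: "2 \<le> N" and eA: "\<forall>i<N. e i \<in> A"
  shows "sat A le e (SatF \<alpha> \<beta> N) \<longleftrightarrow> (\<exists>col. GoodCol A le \<alpha> \<beta> e N col)"
proof
  assume "sat A le e (SatF \<alpha> \<beta> N)"
  then obtain c where c: "c < 2^N" "sat A le e (Good \<alpha> \<beta> N c)" unfolding SatF_def by auto
  then have tg: "tgood c = 0" unfolding Good_def by (auto split: if_splits)
  then have G: "sat A le e (Ords N c)" "sat A le e (Meets \<alpha> N c)" "sat A le e (Joins \<beta> N c)"
    using c(2) unfolding Good_def by auto
  define col where "col i = (bt c i \<noteq> 0)" for i
  have "GoodCol A le \<alpha> \<beta> e N col"
    unfolding GoodCol_def
  proof (intro conjI allI impI ballI)
    have "bt c 0 \<noteq> 0 \<and> bt c 1 = 0" using tg tgood_0 by blast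
    then show "col 0" "\<not> col 1" by (simp_all add: col_def)
  next
    fix i j assume ij: "i < N" "j < N" "col i \<and> le (e i) (e j)"
    have o: "\<forall>i<N. \<forall>j<N. bt c i \<noteq> 0 \<and> bt c j = 0 \<longrightarrow> \<not> le (e i) (e j)" using G(1) by (simp only: sat_Ords)
    show "col j"
    proof (rule ccontr)
      assume "\<not> col j"
      then have "bt c j = 0" "bt c i \<noteq> 0" using ij(3) by (simp_all add: col_def)
      then show False using o ij by blast
    qed
  next
    fix SS m assume SS: "SS \<subseteq> {..<N} \<and> enat (card SS) < \<alpha>" and m: "m < N"
      and H: "(\<forall>s\<in>SS. col s) \<and> is_meet A le (e ` SS) (e m)"
    obtain S where S: "S < 2^N" "\<forall>i<N. bt S i \<noteq> 0 \<longleftrightarrow> i \<in> SS" using mask_exists[of SS N] SS by blast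
    have eq: "{s. s < N \<and> bt S s \<noteq> 0} = SS" using S SS by auto
    have pc: "pc N S = card SS" using eq by (simp add: pc_card)
    show "col m"
    proof (rule ccontr)
      assume "\<not> col m"
      then have "bt c m = 0" by (simp add: col_def)
      moreover have "\<forall>i<N. bt S i \<noteq> 0 \<longrightarrow> bt c i \<noteq> 0" using S H by (auto simp: col_def)
      ultimately have "\<not> is_meet A le (e ` {s. s < N \<and> bt S s \<noteq> 0}) (e m)"
        using G(2) sat_Meets[OF eA] S(1) m pc SS by auto
      then show False using H eq by simp
    qed
  next
    fix TT m assume TT: "TT \<subseteq> {..<N} \<and> enat (card TT) < \<beta>" and m: "m < N"
      and H: "col m \<and> is_join A le (e ` TT) (e m)"
    obtain T where T: "T < 2^N" "\<forall>i<N. bt T i \<noteq> 0 \<longleftrightarrow> i \<in> TT" using mask_exists[of TT N] TT by blast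
    have eq: "{s. s < N \<and> bt T s \<noteq> 0} = TT" using T TT by auto
    have pc: "pc N T = card TT" using eq by (simp add: pc_card)
    show "\<exists>t\<in>TT. col t"
    proof (rule ccontr)
      assume "\<not> (\<exists>t\<in>TT. col t)"
      then have "\<forall>i<N. bt T i \<noteq> 0 \<longrightarrow> bt c i = 0" using T by (auto simp: col_def)
      moreover have "bt c m \<noteq> 0" using H by (simp add: col_def)
      ultimately have "\<not> is_join A le (e ` {s. s < N \<and> bt T s \<noteq> 0}) (e m)"
        using G(3) sat_Joins[OF eA] T(1) m pc TT by auto
      then show False using H eq by simp
    qed
  qed
  then show "\<exists>col. GoodCol A le \<alpha> \<beta> e N col" by blast
next
  assume "\<exists>col. GoodCol A le \<alpha> \<beta> e N col"
  then obtain col where C: "GoodCol A le \<alpha> \<beta> e N col" by blast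
  obtain c where c: "c < 2^N" "\<forall>i<N. bt c i \<noteq> 0 \<longleftrightarrow> i \<in> {i. i < N \<and> col i}"
    using mask_exists[of "{i. i < N \<and> col i}" N] by auto
  have cc: "i < N \<Longrightarrow> bt c i \<noteq> 0 \<longleftrightarrow> col i" for i using c by auto
  have "col 0" "\<not> col 1" using GC_D[OF C] by simp_all
  then have "bt c 0 \<noteq> 0" "bt c 1 = 0" using N cc[of 0] cc[of 1] by auto
  then have tg: "tgood c = 0" by (simp add: tgood_0)
  note ord = GC_D(3)[OF C]
  have O: "sat A le e (Ords N c)"
    unfolding sat_Ords
  proof (intro allI impI)
    fix i j assume ij: "i < N" "j < N" "bt c i \<noteq> 0 \<and> bt c j = 0"
    have ci: "col i" using cc[OF ij(1)] ij(3) by simp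
    have cj: "\<not> col j" using cc[OF ij(2)] ij(3) by simp
    show "\<not> le (e i) (e j)"
    proof
      assume "le (e i) (e j)"
      then have "col j" using ord[OF ij(1,2) ci] by simp
      then show False using cj by simp
    qed
  qed
  have M: "sat A le e (Meets \<alpha> N c)"
    unfolding sat_Meets[OF eA]
  proof (intro allI impI)
    fix S m assume S: "S < 2^N" "m < N"
      and H: "enat (pc N S) < \<alpha> \<and> (\<forall>i<N. bt S i \<noteq> 0 \<longrightarrow> bt c i \<noteq> 0) \<and> bt c m = 0"
    let ?SS = "{s. s < N \<and> bt S s \<noteq> 0}"
    have "?SS \<subseteq> {..<N} \<and> enat (card ?SS) < \<alpha>" using H by (auto simp: pc_card)
    moreover have "\<forall>s\<in>?SS. col s"
    proof
      fix s assume "s \<in> ?SS"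
      then have "s < N" "bt S s \<noteq> 0" by auto
      then have "bt c s \<noteq> 0" using H by blast
      then show "col s" using cc[OF \<open>s < N\<close>] by simp
    qed
    moreover have "\<not> col m" using H cc[OF S(2)] by simp
    ultimately show "\<not> is_meet A le (e ` ?SS) (e m)" using GC_D(4)[OF C _ _ S(2)] by blast
  qed
  have J: "sat A le e (Joins \<beta> N c)"
    unfolding sat_Joins[OF eA]
  proof (intro allI impI)
    fix T m assume T: "T < 2^N" "m < N"
      and H: "enat (pc N T) < \<beta> \<and> bt c m \<noteq> 0 \<and> (\<forall>i<N. bt T i \<noteq> 0 \<longrightarrow> bt c i = 0)"
    let ?TT = "{s. s < N \<and> bt T s \<noteq> 0}"
    have "?TT \<subseteq> {..<N} \<and> enat (card ?TT) < \<beta>" using H by (auto simp: pc_card)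
    moreover have "\<not> (\<exists>t\<in>?TT. col t)"
    proof
      assume "\<exists>t\<in>?TT. col t"
      then obtain t where t: "t < N" "bt T t \<noteq> 0" "col t" by auto
      then have "bt c t = 0" using H by blast
      then show False using cc[OF t(1)] t(3) by simp
    qed
    moreover have "col m" using H cc[OF T(2)] by simp
    ultimately show "\<not> is_join A le (e ` ?TT) (e m)" using GC_D(5)[OF C _ _ T(2)] by blast
  qed
  have "sat A le e (Good \<alpha> \<beta> N c)" unfolding Good_def using tg O M J by simp
  then show "sat A le e (SatF \<alpha> \<beta> N)" unfolding SatF_def using c(1) by auto
qed

lemma sat_Phi:
  "sat A le e (Phi \<alpha> \<beta> n) \<longleftrightarrow> (\<forall>f. (\<forall>i\<in>{0..<n+2}. f i \<in> A) \<longrightarrow> \<not> le (f 0) (f 1) \<longrightarrow>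
      sat A le (\<lambda>i. if i < n + 2 then f i else e i) (SatF \<alpha> \<beta> (n+2)))"
proof -
  have "sat A le e (Phi \<alpha> \<beta> n) \<longleftrightarrow> (\<forall>f. (\<forall>i\<in>{0..<n+2}. f i \<in> A) \<longrightarrow>
     sat A le (\<lambda>i. if 0 \<le> i \<and> i < n+2 then f i else e i) (FImp (fNeg (FLe 0 1)) (SatF \<alpha> \<beta> (n+2))))"
    unfolding Phi_def using sat_allsfrom[of "n+2" "n+2" A le e] by simp
  then show ?thesis by simp
qed



definition goodF :: "nat set \<Rightarrow> (nat \<Rightarrow> nat \<Rightarrow> bool) \<Rightarrow> enat \<Rightarrow> enat \<Rightarrow> nat set \<Rightarrow> bool" where
  "goodF A le \<alpha> \<beta> F \<longleftrightarrow> F \<subseteq> A \<and> (\<forall>x\<in>F. \<forall>y\<in>A. le x y \<longrightarrow> y \<in> F) \<and>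
     (\<forall>S m. S \<subseteq> F \<and> card_less S \<alpha> \<and> is_meet A le S m \<longrightarrow> m \<in> F) \<and>
     (\<forall>T m. T \<subseteq> A \<and> card_less T \<beta> \<and> is_join A le T m \<and> m \<in> F \<longrightarrow> (\<exists>t\<in>T. t \<in> F))"

lemma goodF_D:
  assumes "goodF A le \<alpha> \<beta> F"
  shows "F \<subseteq> A" "\<And>x y. x \<in> F \<Longrightarrow> y \<in> A \<Longrightarrow> le x y \<Longrightarrow> y \<in> F"
    "\<And>S m. S \<subseteq> F \<Longrightarrow> card_less S \<alpha> \<Longrightarrow> is_meet A le S m \<Longrightarrow> m \<in> F"
    "\<And>T m. T \<subseteq> A \<Longrightarrow> card_less T \<beta> \<Longrightarrow> is_join A le T m \<Longrightarrow> m \<in> F \<Longrightarrow> \<exists>t\<in>T. t \<in> F"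
proof -
  note a = assms[unfolded goodF_def]
  show "F \<subseteq> A" using a[THEN conjunct1] .
  show "\<And>x y. x \<in> F \<Longrightarrow> y \<in> A \<Longrightarrow> le x y \<Longrightarrow> y \<in> F"
    using a[THEN conjunct2, THEN conjunct1] by simp
  show "\<And>S m. S \<subseteq> F \<Longrightarrow> card_less S \<alpha> \<Longrightarrow> is_meet A le S m \<Longrightarrow> m \<in> F"
    using a[THEN conjunct2, THEN conjunct2, THEN conjunct1] by simp
  show "\<And>T m. T \<subseteq> A \<Longrightarrow> card_less T \<beta> \<Longrightarrow> is_join A le T m \<Longrightarrow> m \<in> F \<Longrightarrow> \<exists>t\<in>T. t \<in> F"
  proof -
    fix T m assume "T \<subseteq> A" "card_less T \<beta>" "is_join A le T m" "m \<in> F"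
    then show "\<exists>t\<in>T. t \<in> F" using a[THEN conjunct2, THEN conjunct2, THEN conjunct2, rule_format, of T m] by simp
  qed
qed

definition Sep :: "nat set \<Rightarrow> (nat \<Rightarrow> nat \<Rightarrow> bool) \<Rightarrow> enat \<Rightarrow> enat \<Rightarrow> bool" where
  "Sep A le \<alpha> \<beta> \<longleftrightarrow> (\<forall>p\<in>A. \<forall>q\<in>A. \<not> le p q \<longrightarrow> (\<exists>F. goodF A le \<alpha> \<beta> F \<and> p \<in> F \<and> q \<notin> F))"

lemma R1: assumes "representable \<alpha> \<beta> A le" shows "Sep A le \<alpha> \<beta>"
  unfolding Sep_def
proof (intro ballI impI)
  fix p q assume pq: "p \<in> A" "q \<in> A" "\<not> le p q"
  obtain X :: "nat set set" and h where R: "representation \<alpha> \<beta> A le X h"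
    using assms unfolding representable_def by (elim exE)
  note R' = R[unfolded representation_def]
  have hX: "\<And>p. p \<in> A \<Longrightarrow> h p \<subseteq> X" using R'[THEN conjunct1] by simp
  have emb: "\<And>p q. p \<in> A \<Longrightarrow> q \<in> A \<Longrightarrow> le p q \<longleftrightarrow> h p \<subseteq> h q"
    using R'[THEN conjunct2, THEN conjunct1] by simp
  have mt: "\<And>S m. S \<subseteq> A \<Longrightarrow> card_less S \<alpha> \<Longrightarrow> is_meet A le S m \<Longrightarrow> h m = X \<inter> (\<Inter>s\<in>S. h s)"
    using R'[THEN conjunct2, THEN conjunct2, THEN conjunct1] by simp
  have jn: "\<And>T m. T \<subseteq> A \<Longrightarrow> card_less T \<beta> \<Longrightarrow> is_join A le T m \<Longrightarrow> h m = (\<Union>t\<in>T. h t)"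
    using R'[THEN conjunct2, THEN conjunct2, THEN conjunct2] by simp
  obtain x where x: "x \<in> h p" "x \<notin> h q" using emb[OF pq(1,2)] pq(3) by blast
  have xX: "x \<in> X" using x hX pq by blast
  define F where "F = {a\<in>A. x \<in> h a}"
  have "goodF A le \<alpha> \<beta> F" unfolding goodF_def
  proof (intro conjI allI impI ballI)
    show "F \<subseteq> A" by (auto simp: F_def)
  next
    fix a b assume "a \<in> F" "b \<in> A" "le a b"
    then show "b \<in> F" using emb[of a b] by (auto simp: F_def)
  next
    fix S m assume H: "S \<subseteq> F \<and> card_less S \<alpha> \<and> is_meet A le S m"
    then have "S \<subseteq> A" by (auto simp: F_def)
    then have "h m = X \<inter> (\<Inter>s\<in>S. h s)" using mt H by blast
    moreover have "x \<in> X \<inter> (\<Inter>s\<in>S. h s)" using xX H by (auto simp: F_def)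
    moreover have "m \<in> A" using H by (simp add: is_meet_def)
    ultimately show "m \<in> F" by (simp add: F_def)
  next
    fix T m assume H: "T \<subseteq> A \<and> card_less T \<beta> \<and> is_join A le T m \<and> m \<in> F"
    then have "h m = (\<Union>t\<in>T. h t)" using jn by blast
    moreover have "x \<in> h m" using H by (simp add: F_def)
    ultimately show "\<exists>t\<in>T. t \<in> F" using H by (auto simp: F_def)
  qed
  moreover have "p \<in> F" "q \<notin> F" using x pq by (auto simp: F_def)
  ultimately show "\<exists>F. goodF A le \<alpha> \<beta> F \<and> p \<in> F \<and> q \<notin> F" by blast
qed

lemma R2: assumes S: "Sep A le \<alpha> \<beta>" shows "representable \<alpha> \<beta> A le"
proof -
  define X where "X = {F. goodF A le \<alpha> \<beta> F}"
  define h where "h p = {F\<in>X. p \<in> F}" for p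
  have up: "F \<in> X \<Longrightarrow> x \<in> F \<Longrightarrow> y \<in> A \<Longrightarrow> le x y \<Longrightarrow> y \<in> F" for F x y
    unfolding X_def using goodF_D(2) by blast
  have "representation \<alpha> \<beta> A le X h"
    unfolding representation_def
  proof (intro conjI ballI allI impI)
    fix p assume "p \<in> A" then show "h p \<subseteq> X" by (auto simp: h_def)
  next
    fix p q assume pq: "p \<in> A" "q \<in> A"
    show "le p q \<longleftrightarrow> h p \<subseteq> h q"
    proof
      assume "le p q" then show "h p \<subseteq> h q" using up pq by (auto simp: h_def)
    next
      assume hh: "h p \<subseteq> h q"
      show "le p q"
      proof (rule ccontr)
        assume "\<not> le p q"
        then obtain F where "goodF A le \<alpha> \<beta> F" "p \<in> F" "q \<notin> F" using S pq unfolding Sep_def by blast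
        then show False using hh by (auto simp: h_def X_def)
      qed
    qed
  next
    fix S m assume H: "S \<subseteq> A \<and> card_less S \<alpha> \<and> is_meet A le S m"
    show "h m = X \<inter> (\<Inter>s\<in>S. h s)"
    proof
      show "h m \<subseteq> X \<inter> (\<Inter>s\<in>S. h s)"
      proof
        fix F assume F: "F \<in> h m"
        have "\<forall>s\<in>S. F \<in> h s"
        proof
          fix s assume s: "s \<in> S"
          have "le m s" using H s by (simp add: is_meet_def)
          then have "s \<in> F" using up[of F m s] F s H by (auto simp: h_def)
          then show "F \<in> h s" using F by (simp add: h_def)
        qed
        then show "F \<in> X \<inter> (\<Inter>s\<in>S. h s)" using F by (simp add: h_def)
      qed
    next
      show "X \<inter> (\<Inter>s\<in>S. h s) \<subseteq> h m"
      proof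
        fix F assume F: "F \<in> X \<inter> (\<Inter>s\<in>S. h s)"
        then have "S \<subseteq> F" "goodF A le \<alpha> \<beta> F" by (auto simp: h_def X_def)
        then have "m \<in> F" using H goodF_D(3) by blast
        then show "F \<in> h m" using F by (simp add: h_def)
      qed
    qed
  next
    fix T m assume H: "T \<subseteq> A \<and> card_less T \<beta> \<and> is_join A le T m"
    show "h m = (\<Union>t\<in>T. h t)"
    proof
      show "h m \<subseteq> (\<Union>t\<in>T. h t)"
      proof
        fix F assume F: "F \<in> h m"
        then have "goodF A le \<alpha> \<beta> F" "m \<in> F" by (auto simp: h_def X_def)
        then obtain t where "t \<in> T" "t \<in> F" using H goodF_D(4) by blast
        then show "F \<in> (\<Union>t\<in>T. h t)" using F by (auto simp: h_def)
      qed
    next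
      show "(\<Union>t\<in>T. h t) \<subseteq> h m"
      proof
        fix F assume "F \<in> (\<Union>t\<in>T. h t)"
        then obtain t where t: "t \<in> T" "F \<in> X" "t \<in> F" by (auto simp: h_def)
        have "le t m" "m \<in> A" using H t(1) by (auto simp: is_join_def)
        then have "m \<in> F" using up[OF t(2) t(3)] by blast
        then show "F \<in> h m" using t by (simp add: h_def)
      qed
    qed
  qed
  then show ?thesis unfolding representable_def by blast
qed



lemma M2: assumes S: "Sep A le \<alpha> \<beta>" shows "models A le (range (Phi \<alpha> \<beta>))"
  unfolding models_def
proof (intro ballI allI impI)
  fix \<phi> and e :: "nat \<Rightarrow> nat" assume \<phi>: "\<phi> \<in> range (Phi \<alpha> \<beta>)" and eA: "\<forall>i. e i \<in> A"
  then obtain n where n: "\<phi> = Phi \<alpha> \<beta> n" by blast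
  let ?N = "n + 2"
  show "sat A le e \<phi>"
    unfolding n sat_Phi
  proof (intro allI impI)
    fix f assume fA: "\<forall>i\<in>{0..<n+2}. f i \<in> A" and nle: "\<not> le (f 0) (f 1)"
    define env where "env i = (if i < n + 2 then f i else e i)" for i
    have envA: "\<forall>i<?N. env i \<in> A" using fA by (simp add: env_def)
    have env01: "env 0 = f 0" "env 1 = f 1" by (simp_all add: env_def)
    have "f 0 \<in> A" "f 1 \<in> A" using fA by auto
    then obtain F where F0: "goodF A le \<alpha> \<beta> F" "f 0 \<in> F" "f 1 \<notin> F"
      using S nle unfolding Sep_def by blast
    then have F: "goodF A le \<alpha> \<beta> F" "env 0 \<in> F" "env 1 \<notin> F" using env01 by simp_all
    define col where "col i = (env i \<in> F)" for i
    have "GoodCol A le \<alpha> \<beta> env ?N col"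
      unfolding GoodCol_def
    proof (intro conjI allI impI ballI)
      show "col 0" "\<not> col 1" using F by (simp_all add: col_def)
    next
      fix i j assume "i < ?N" "j < ?N" "col i \<and> le (env i) (env j)"
      then show "col j" using goodF_D(2)[OF F(1), of "env i" "env j"] envA by (simp add: col_def)
    next
      fix SS m assume SS: "SS \<subseteq> {..<?N} \<and> enat (card SS) < \<alpha>" and m: "m < ?N"
        and H: "(\<forall>s\<in>SS. col s) \<and> is_meet A le (env ` SS) (env m)"
      have fin: "finite SS" using SS finite_subset by blast
      have "card (env ` SS) \<le> card SS" using fin by (rule card_image_le)
      then have "card_less (env ` SS) \<alpha>" using SS fin unfolding card_less_def
        by (meson finite_imageI enat_ord_simps(1) le_less_trans)
      moreover have "env ` SS \<subseteq> F" using H by (auto simp: col_def)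
      ultimately have "env m \<in> F" using goodF_D(3)[OF F(1), of "env ` SS" "env m"] H by simp
      then show "col m" by (simp add: col_def)
    next
      fix TT m assume TT: "TT \<subseteq> {..<?N} \<and> enat (card TT) < \<beta>" and m: "m < ?N"
        and H: "col m \<and> is_join A le (env ` TT) (env m)"
      have fin: "finite TT" using TT finite_subset by blast
      have "card (env ` TT) \<le> card TT" using fin by (rule card_image_le)
      then have "card_less (env ` TT) \<beta>" using TT fin unfolding card_less_def
        by (meson finite_imageI enat_ord_simps(1) le_less_trans)
      moreover have "env ` TT \<subseteq> A" using TT envA by auto
      moreover have "env m \<in> F" using H by (simp add: col_def)
      ultimately have "\<exists>t\<in>env ` TT. t \<in> F" using goodF_D(4)[OF F(1), of "env ` TT" "env m"] H by simp
      then obtain t where "t \<in> env ` TT" "t \<in> F" by blast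
      then show "\<exists>t\<in>TT. col t" by (auto simp: col_def)
    qed
    then have "sat A le env (SatF \<alpha> \<beta> ?N)" using sat_SatF[of ?N env A le \<alpha> \<beta>] envA by auto
    then show "sat A le (\<lambda>i. if i < n + 2 then f i else e i) (SatF \<alpha> \<beta> (n + 2))"
      unfolding env_def by simp
  qed
qed



lemma GC_mono:
  assumes G: "GoodCol A le \<alpha> \<beta> e N' col" and NN: "N \<le> N'"
  shows "GoodCol A le \<alpha> \<beta> e N col"
  unfolding GoodCol_def
proof (intro conjI allI impI ballI)
  show "col 0" "\<not> col 1" using GC_D(1,2)[OF G] by simp_all
next
  fix i j assume "i < N" "j < N" "col i \<and> le (e i) (e j)"
  then show "col j" using GC_D(3)[OF G, of i j] NN by simp
next
  fix SS m assume SS: "SS \<subseteq> {..<N} \<and> enat (card SS) < \<alpha>" and m: "m < N"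
    and H: "(\<forall>s\<in>SS. col s) \<and> is_meet A le (e ` SS) (e m)"
  have "SS \<subseteq> {..<N'}" using SS NN by auto
  then show "col m" using GC_D(4)[OF G, of SS m] SS m H NN by simp
next
  fix TT m assume TT: "TT \<subseteq> {..<N} \<and> enat (card TT) < \<beta>" and m: "m < N"
    and H: "col m \<and> is_join A le (e ` TT) (e m)"
  have "TT \<subseteq> {..<N'}" using TT NN by auto
  then show "\<exists>t\<in>TT. col t" using GC_D(5)[OF G, of TT m] TT m H NN by simp
qed

lemma GC_local:
  assumes G: "GoodCol A le \<alpha> \<beta> e N col" and N: "2 \<le> N" and eq: "\<forall>i<N. col' i = col i"
  shows "GoodCol A le \<alpha> \<beta> e N col'"
  unfolding GoodCol_def
proof (intro conjI allI impI ballI)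
  show "col' 0" "\<not> col' 1" using GC_D(1,2)[OF G] eq N by simp_all
next
  fix i j assume "i < N" "j < N" "col' i \<and> le (e i) (e j)"
  then show "col' j" using GC_D(3)[OF G, of i j] eq by simp
next
  fix SS m assume SS: "SS \<subseteq> {..<N} \<and> enat (card SS) < \<alpha>" and m: "m < N"
    and H: "(\<forall>s\<in>SS. col' s) \<and> is_meet A le (e ` SS) (e m)"
  have "\<forall>s\<in>SS. col s" using H SS eq by auto
  then show "col' m" using GC_D(4)[OF G, of SS m] SS m H eq by simp
next
  fix TT m assume TT: "TT \<subseteq> {..<N} \<and> enat (card TT) < \<beta>" and m: "m < N"
    and H: "col' m \<and> is_join A le (e ` TT) (e m)"
  have "\<exists>t\<in>TT. col t" using GC_D(5)[OF G, of TT m] TT m H eq by simp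
  then show "\<exists>t\<in>TT. col' t" using TT eq by auto
qed

definition Ext :: "nat set \<Rightarrow> (nat \<Rightarrow> nat \<Rightarrow> bool) \<Rightarrow> enat \<Rightarrow> enat \<Rightarrow> (nat \<Rightarrow> nat) \<Rightarrow> nat \<Rightarrow> (nat \<Rightarrow> bool) \<Rightarrow> bool" where
  "Ext A le \<alpha> \<beta> e N col \<longleftrightarrow> (\<forall>N'\<ge>N. \<exists>col'. GoodCol A le \<alpha> \<beta> e N' col' \<and> (\<forall>i<N. col' i = col i))"

lemma Ext_step:
  assumes N: "2 \<le> N" and X: "Ext A le \<alpha> \<beta> e N col"
  shows "\<exists>b. Ext A le \<alpha> \<beta> e (Suc N) (col(N := b))"
proof (rule ccontr)
  assume "\<not> (\<exists>b. Ext A le \<alpha> \<beta> e (Suc N) (col(N := b)))"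
  then have nb: "\<And>b. \<exists>N'\<ge>Suc N. \<forall>col'. GoodCol A le \<alpha> \<beta> e N' col' \<longrightarrow> \<not> (\<forall>i<Suc N. col' i = (col(N := b)) i)"
    unfolding Ext_def by blast
  obtain N1 where N1: "N1 \<ge> Suc N" "\<And>col'. GoodCol A le \<alpha> \<beta> e N1 col' \<Longrightarrow> \<not> (\<forall>i<Suc N. col' i = (col(N := True)) i)"
    using nb[of True] by blast
  obtain N2 where N2: "N2 \<ge> Suc N" "\<And>col'. GoodCol A le \<alpha> \<beta> e N2 col' \<Longrightarrow> \<not> (\<forall>i<Suc N. col' i = (col(N := False)) i)"
    using nb[of False] by blast
  obtain c where c: "GoodCol A le \<alpha> \<beta> e (max N1 N2) c" "\<forall>i<N. c i = col i"
  proof -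
    have "N \<le> max N1 N2" using N1(1) by simp
    then show ?thesis using X[unfolded Ext_def, rule_format, of "max N1 N2"] that by blast
  qed
  have agree: "\<forall>i<Suc N. c i = (col(N := c N)) i" using c(2) by (auto simp: less_Suc_eq)
  show False
  proof (cases "c N")
    case True
    have g: "GoodCol A le \<alpha> \<beta> e N1 c" using GC_mono[OF c(1)] by simp
    have a: "\<forall>i<Suc N. c i = (col(N := True)) i" using agree True by simp
    show False by (rule notE[OF N1(2)[OF g] a])
  next
    case False
    have g: "GoodCol A le \<alpha> \<beta> e N2 c" using GC_mono[OF c(1)] by simp
    have a: "\<forall>i<Suc N. c i = (col(N := False)) i" using agree False by simp
    show False by (rule notE[OF N2(2)[OF g] a])
  qed
qed



lemma branch:
  assumes ex: "\<And>N. 2 \<le> N \<Longrightarrow> \<exists>col. GoodCol A le \<alpha> \<beta> e N col"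
  shows "\<exists>Col. \<forall>N\<ge>2. GoodCol A le \<alpha> \<beta> e N Col"
proof -
  let ?X = "Ext A le \<alpha> \<beta> e"
  have X2: "?X 2 (\<lambda>i. i = 0)"
    unfolding Ext_def
  proof (intro allI impI)
    fix N' :: nat assume "2 \<le> N'"
    then obtain c where c: "GoodCol A le \<alpha> \<beta> e N' c" using ex by blast
    have "\<forall>i<2. c i = (i = 0)"
    proof (intro allI impI)
      fix i :: nat assume "i < 2"
      then have "i = 0 \<or> i = 1" by auto
      then show "c i = (i = 0)" using GC_D(1,2)[OF c] by auto
    qed
    then show "\<exists>col'. GoodCol A le \<alpha> \<beta> e N' col' \<and> (\<forall>i<2. col' i = (i = 0))" using c by blast
  qed
  define B where "B = rec_nat (\<lambda>i. i = 0) (\<lambda>k c. SOME c'. (\<exists>b. c' = c(k+2 := b)) \<and> ?X (k+3) c')"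
  have B0: "B 0 = (\<lambda>i. i = 0)" by (simp add: B_def)
  have BS: "B (Suc k) = (SOME c'. (\<exists>b. c' = (B k)(k+2 := b)) \<and> ?X (k+3) c')" for k
    by (simp add: B_def)
  have step: "?X (k+2) (B k) \<Longrightarrow> (\<exists>b. B (Suc k) = (B k)(k+2 := b)) \<and> ?X (k+3) (B (Suc k))" for k
  proof -
    assume a: "?X (k+2) (B k)"
    have "\<exists>b. ?X (Suc (k+2)) ((B k)(k+2 := b))" by (rule Ext_step[OF _ a]) simp
    then obtain b where "?X (Suc (k+2)) ((B k)(k+2 := b))" by blast
    moreover have e3: "k+3 = Suc (k+2)" by simp
    ultimately have "?X (k+3) ((B k)(k+2 := b))" by (simp only: e3)
    then have "\<exists>c'. (\<exists>b. c' = (B k)(k+2 := b)) \<and> ?X (k+3) c'" by blast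
    then show ?thesis unfolding BS by (rule someI_ex)
  qed
  have Xk: "?X (k+2) (B k)" for k
  proof (induction k)
    case 0 then show ?case using X2 B0 by (simp add: eval_nat_numeral)
  next
    case (Suc k) then show ?case using step[of k] by (simp add: eval_nat_numeral)
  qed
  have ag: "i < k+2 \<Longrightarrow> B (Suc k) i = B k i" for i k
    using step[OF Xk[of k]] by auto
  have ag2: "i < k+2 \<Longrightarrow> B (k+d) i = B k i" for i k d
  proof (induction d)
    case 0 then show ?case by simp
  next
    case (Suc d)
    have "B (Suc (k+d)) i = B (k+d) i" using ag[of i "k+d"] Suc.prems by simp
    then show ?case using Suc by simp
  qed
  define Col where "Col i = B i i" for i
  have "\<forall>N\<ge>2. GoodCol A le \<alpha> \<beta> e N Col"
  proof (intro allI impI)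
    fix N :: nat assume N: "2 \<le> N"
    define k where "k = N - 2"
    have Nk: "N = k + 2" using N k_def by simp
    obtain c where c: "GoodCol A le \<alpha> \<beta> e N c" "\<forall>i<N. c i = B k i"
      using Xk[of k] unfolding Ext_def Nk by blast
    have "\<forall>i<N. Col i = c i"
    proof (intro allI impI)
      fix i assume i: "i < N"
      show "Col i = c i"
      proof (cases "i \<le> k")
        case True
        have "B (i + (k - i)) i = B i i" by (rule ag2) simp
        then show ?thesis using True c(2) i by (simp add: Col_def)
      next
        case False
        then have "i = Suc k" using i Nk by simp
        then show ?thesis using ag[of i k] c(2) i by (simp add: Col_def)
      qed
    qed
    then show "GoodCol A le \<alpha> \<beta> e N Col" using GC_local[OF c(1) N] by simp
  qed
  then show ?thesis by blast
qed



lemma M1: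
  assumes P: "poset_on A le" and M: "models A le (range (Phi \<alpha> \<beta>))"
  shows "Sep A le \<alpha> \<beta>"
  unfolding Sep_def
proof (intro ballI impI)
  fix p q assume pA: "p \<in> A" and qA: "q \<in> A" and npq: "\<not> le p q"
  define E where "E i = (if i = 0 then p else if i = 1 then q else if i - 2 \<in> A then i - 2 else p)" for i
  have EA: "\<forall>i. E i \<in> A" using pA qA by (simp add: E_def)
  have E2: "x \<in> A \<Longrightarrow> E (x+2) = x" for x by (simp add: E_def)
  have E0: "E 0 = p" and E1: "E 1 = q" by (simp_all add: E_def)
  have ex: "\<exists>col. GoodCol A le \<alpha> \<beta> E N col" if N: "2 \<le> N" for N
  proof -
    have mem: "Phi \<alpha> \<beta> (N-2) \<in> range (Phi \<alpha> \<beta>)" by simp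
    have "sat A le E (Phi \<alpha> \<beta> (N-2))"
      by (rule M[unfolded models_def, rule_format, OF mem]) (simp add: EA)
    then have H: "\<forall>f. (\<forall>i\<in>{0..<N-2+2}. f i \<in> A) \<longrightarrow> \<not> le (f 0) (f 1) \<longrightarrow>
      sat A le (\<lambda>i. if i < N-2+2 then f i else E i) (SatF \<alpha> \<beta> (N-2+2))"
      by (simp only: sat_Phi)
    have "sat A le (\<lambda>i. if i < N - 2 + 2 then E i else E i) (SatF \<alpha> \<beta> (N - 2 + 2))"
      by (rule H[rule_format, of E]) (use EA npq E0 E1 in auto)
    moreover have "N - 2 + 2 = N" using N by simp
    ultimately have "sat A le E (SatF \<alpha> \<beta> N)" by simp
    then show ?thesis using sat_SatF[OF N, of E A le \<alpha> \<beta>] EA by simp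
  qed
  obtain Col where GCall: "\<forall>N\<ge>2. GoodCol A le \<alpha> \<beta> E N Col" using branch[of A le \<alpha> \<beta> E] ex by blast
  have GC: "GoodCol A le \<alpha> \<beta> E N Col" if "2 \<le> N" for N using GCall that by simp
  have refl: "\<And>x. x \<in> A \<Longrightarrow> le x x" using P unfolding poset_on_def by blast
  have cons: "Col j" if "E i = E j" "Col i" for i j
  proof -
    have G: "GoodCol A le \<alpha> \<beta> E (i + j + 2) Col" by (rule GC) simp
    have "le (E i) (E j)" using that(1) refl EA by simp
    then show ?thesis using GC_D(3)[OF G, of i j] that(2) by simp
  qed
  define F where "F = {x\<in>A. Col (x+2)}"
  have C0: "Col 0" "\<not> Col 1" using GC_D(1,2)[OF GC[of 2]] by simp_all
  have "p \<in> F" using cons[of 0 "p+2"] C0 E0 E2[OF pA] pA by (simp add: F_def)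
  moreover have "q \<notin> F"
  proof
    assume "q \<in> F"
    then have "Col (q+2)" by (simp add: F_def)
    then have "Col 1" using cons[of "q+2" 1] E1 E2[OF qA] by simp
    then show False using C0 by simp
  qed
  moreover have "goodF A le \<alpha> \<beta> F"
    unfolding goodF_def
  proof (intro conjI allI impI ballI)
    show "F \<subseteq> A" by (auto simp: F_def)
  next
    fix x y assume x: "x \<in> F" and y: "y \<in> A" and xy: "le x y"
    have G: "GoodCol A le \<alpha> \<beta> E (x + y + 5) Col" by (rule GC) simp
    have xA: "x \<in> A" "Col (x+2)" using x by (auto simp: F_def)
    have "le (E (x+2)) (E (y+2))" using xy E2[OF xA(1)] E2[OF y] by simp
    then have "Col (y+2)" using GC_D(3)[OF G, of "x+2" "y+2"] xA by simp
    then show "y \<in> F" using y by (simp add: F_def)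
  next
    fix S m assume H: "S \<subseteq> F \<and> card_less S \<alpha> \<and> is_meet A le S m"
    have fin: "finite S" and cS: "enat (card S) < \<alpha>" using H by (auto simp: card_less_def)
    have SA: "S \<subseteq> A" using H by (auto simp: F_def)
    have mA: "m \<in> A" using H by (simp add: is_meet_def)
    define N where "N = Max (insert m S) + 3"
    define SS where "SS = (\<lambda>s. s + 2) ` S"
    have SSN: "SS \<subseteq> {..<N}"
    proof
      fix t assume "t \<in> SS"
      then obtain s where s: "s \<in> S" "t = s + 2" by (auto simp: SS_def)
      have "s \<le> Max (insert m S)" using fin s(1) by simp
      then show "t \<in> {..<N}" using s(2) by (simp add: N_def)
    qed
    have "card SS = card S" unfolding SS_def by (rule card_image) (simp add: inj_on_def)
    then have cSS: "enat (card SS) < \<alpha>" using cS by simp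
    have "m \<le> Max (insert m S)" using fin by simp
    then have mN: "m + 2 < N" by (simp add: N_def)
    have colS: "\<forall>s\<in>SS. Col s" using H by (auto simp: SS_def F_def)
    have ESS: "E ` SS = S"
    proof -
      have "E ` SS = (\<lambda>s. E (s+2)) ` S" by (simp add: SS_def image_image)
      also have "\<dots> = S" using SA E2 by (auto simp: image_iff) (metis subsetD)
      finally show ?thesis .
    qed
    have "is_meet A le (E ` SS) (E (m+2))" using H ESS E2[OF mA] by simp
    then have "Col (m+2)" using GC_D(4)[OF GC[of N] SSN cSS mN colS] mN by simp
    then show "m \<in> F" using mA by (simp add: F_def)
  next
    fix T m assume H: "T \<subseteq> A \<and> card_less T \<beta> \<and> is_join A le T m \<and> m \<in> F"
    have fin: "finite T" and cT: "enat (card T) < \<beta>" using H by (auto simp: card_less_def)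
    have TA: "T \<subseteq> A" using H by simp
    have mA: "m \<in> A" and cm: "Col (m+2)" using H by (auto simp: F_def)
    define N where "N = Max (insert m T) + 3"
    define TT where "TT = (\<lambda>s. s + 2) ` T"
    have TTN: "TT \<subseteq> {..<N}"
    proof
      fix t assume "t \<in> TT"
      then obtain s where s: "s \<in> T" "t = s + 2" by (auto simp: TT_def)
      have "s \<le> Max (insert m T)" using fin s(1) by simp
      then show "t \<in> {..<N}" using s(2) by (simp add: N_def)
    qed
    have "card TT = card T" unfolding TT_def by (rule card_image) (simp add: inj_on_def)
    then have cTT: "enat (card TT) < \<beta>" using cT by simp
    have "m \<le> Max (insert m T)" using fin by simp
    then have mN: "m + 2 < N" by (simp add: N_def)
    have ETT: "E ` TT = T"
    proof -
      have "E ` TT = (\<lambda>s. E (s+2)) ` T" by (simp add: TT_def image_image)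
      also have "\<dots> = T" using TA E2 by (auto simp: image_iff) (metis subsetD)
      finally show ?thesis .
    qed
    have "is_join A le (E ` TT) (E (m+2))" using H ETT E2[OF mA] by simp
    then have "\<exists>t\<in>TT. Col t" using GC_D(5)[OF GC[of N] TTN cTT mN cm] by (simp add: N_def)
    then obtain s where s: "s \<in> T" "Col (s+2)" by (auto simp: TT_def)
    then show "\<exists>t\<in>T. t \<in> F" using TA by (auto simp: F_def)
  qed
  ultimately show "\<exists>F. goodF A le \<alpha> \<beta> F \<and> p \<in> F \<and> q \<notin> F" by blast
qed

theorem proposition6p4:
  fixes \<alpha> \<beta> :: enat
  assumes "2 \<le> \<alpha>" and "2 \<le> \<beta>"
  shows "\<exists>\<Theta>. (\<forall>\<phi>\<in>\<Theta>. sentence \<phi>) \<and> recursive_fmset \<Theta> \<and>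
           (\<forall>(A :: nat set) le. countable A \<and> poset_on A le \<longrightarrow>
              (models A le \<Theta> \<longleftrightarrow> representable \<alpha> \<beta> A le))"
proof (intro exI conjI allI impI)
  show "\<forall>\<phi>\<in>range (Phi \<alpha> \<beta>). sentence \<phi>" using sentence_Phi by blast
  show "recursive_fmset (range (Phi \<alpha> \<beta>))" by (rule recursive_Phi)
  fix A :: "nat set" and le assume H: "countable A \<and> poset_on A le"
  show "models A le (range (Phi \<alpha> \<beta>)) \<longleftrightarrow> representable \<alpha> \<beta> A le"
  proof
    assume "models A le (range (Phi \<alpha> \<beta>))"
    then show "representable \<alpha> \<beta> A le" using M1 R2 H by blast
  next
    assume "representable \<alpha> \<beta> A le"
    then show "models A le (range (Phi \<alpha> \<beta>))" using R1 M2 by blast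
  qed
qed

end
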